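(* Let $\mathcal{F}\subset L_2([0,1])$ and let $(\mathcal{E},\mathcal{D})$ be a compression code for $\mathcal{F}$ at rate $r$ with distortion $\delta$ and codebook $\mathcal{C}$. Let $W_1,\dots,W_d$ be independent standard Wiener processes on $[0,1]$ and define $\mathcal{A}:L_2([0,1])\to\mathbb{R}^d$ by $\mathcal{A}(f)_i=\int_0^1 f(t)\,dW_i(t)$, $i=1,\dots,d$. For $f_o\in\mathcal{F}$ let ${\bf y}_o=\mathcal{A}(f_o)$ and let $\hat f_o$ be any element of $\arg\min_{g\in\mathcal{C}}\|{\bf y}_o-\mathcal{A}(g)\|_2^2$. Then for arbitrary $\tau_1>0$ and $\tau_2\in(0,1)$, \[ \|\hat f_o-f_o\|_2\le\delta\sqrt{\frac{1+\tau_1}{1-\tau_2}} \] with probability at least \[ 1-2^{r}{\rm e}^{\frac d2(\tau_2+\log(1-\tau_2))}-{\rm e}^{-\frac d2(\tau_1-\log(1+\tau_1))}. \]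
   Context: $L_2([0,1])$ is the set of real functions on $[0,1]$ with $\|f\|_2=(\int_0^1 f(t)^2dt)^{1/2}<\infty$; the integrals $\int_0^1 f\,dW_i$ are Itô integrals. A compression code for $\mathcal{F}$ at rate $r$ is a pair of maps $\mathcal{E}:\mathcal{F}\to\{1,\dots,2^r\}$, $\mathcal{D}:\{1,\dots,2^r\}\to L_2([0,1])$; its codebook is $\mathcal{C}=\{\mathcal{D}(\mathcal{E}(f)):f\in\mathcal{F}\}$ and its distortion is $\delta=\sup_{f\in\mathcal{F}}\|f-\mathcal{D}(\mathcal{E}(f))\|_2$. $\log$ is the natural logarithm. The probability is over the Wiener processes. *)

theory Defs
  imports "HOL-Probability.Probability"
begin

definition L2_01 :: "(real \<Rightarrow> real) set" where
  "L2_01 = {f. set_borel_measurable lborel {0..1} f \<and>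
               set_integrable lborel {0..1} (\<lambda>t. (f t)\<^sup>2)}"

definition L2norm01 :: "(real \<Rightarrow> real) \<Rightarrow> real" where
  "L2norm01 f = sqrt (LINT t:{0..1}|lborel. (f t)\<^sup>2)"

definition wiener_process01 :: "'a measure \<Rightarrow> (real \<Rightarrow> 'a \<Rightarrow> real) \<Rightarrow> bool" where
  "wiener_process01 M W \<longleftrightarrow>
     (\<forall>t\<in>{0..1}. W t \<in> borel_measurable M) \<and>
     (\<forall>\<omega>\<in>space M. W 0 \<omega> = 0) \<and>
     (\<forall>\<omega>\<in>space M. continuous_on {0..1} (\<lambda>t. W t \<omega>)) \<and>
     (\<forall>s t. 0 \<le> s \<and> s < t \<and> t \<le> 1 \<longrightarrow>
        distributed M lborel (\<lambda>\<omega>. W t \<omega> - W s \<omega>)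
          (\<lambda>x. ennreal (normal_density 0 (sqrt (t - s)) x))) \<and>
     (\<forall>(n::nat) (ts::nat \<Rightarrow> real).
        (\<forall>k<n. 0 \<le> ts k \<and> ts k < ts (Suc k) \<and> ts (Suc k) \<le> 1) \<longrightarrow>
        prob_space.indep_vars M (\<lambda>_. borel) (\<lambda>k \<omega>. W (ts (Suc k)) \<omega> - W (ts k) \<omega>) {..<n})"

definition partition01 :: "nat \<Rightarrow> (nat \<Rightarrow> real) \<Rightarrow> bool" where
  "partition01 n ts \<longleftrightarrow> n > 0 \<and> ts 0 = 0 \<and> ts n = 1 \<and> (\<forall>k<n. ts k < ts (Suc k))"

definition step_fun :: "nat \<Rightarrow> (nat \<Rightarrow> real) \<Rightarrow> (nat \<Rightarrow> real) \<Rightarrow> real \<Rightarrow> real" where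
  "step_fun n ts cs s = (\<Sum>k<n. cs k * indicator {ts k..<ts (Suc k)} s)"

definition step_ito :: "(real \<Rightarrow> 'a \<Rightarrow> real) \<Rightarrow> nat \<Rightarrow> (nat \<Rightarrow> real) \<Rightarrow> (nat \<Rightarrow> real) \<Rightarrow> 'a \<Rightarrow> real" where
  "step_ito W n ts cs \<omega> = (\<Sum>k<n. cs k * (W (ts (Suc k)) \<omega> - W (ts k) \<omega>))"

definition is_ito_integral ::
  "'a measure \<Rightarrow> (real \<Rightarrow> 'a \<Rightarrow> real) \<Rightarrow> (real \<Rightarrow> real) \<Rightarrow> ('a \<Rightarrow> real) \<Rightarrow> bool" where
  "is_ito_integral M W f X \<longleftrightarrow>
     X \<in> borel_measurable M \<and>
     (\<exists>(n::nat \<Rightarrow> nat) ts cs.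
        (\<forall>j. partition01 (n j) (ts j)) \<and>
        ((\<lambda>j. L2norm01 (\<lambda>s. f s - step_fun (n j) (ts j) (cs j) s)) \<longlonglongrightarrow> 0) \<and>
        (\<forall>j. integrable M (\<lambda>\<omega>. (X \<omega> - step_ito W (n j) (ts j) (cs j) \<omega>)\<^sup>2)) \<and>
        ((\<lambda>j. integral\<^sup>L M (\<lambda>\<omega>. (X \<omega> - step_ito W (n j) (ts j) (cs j) \<omega>)\<^sup>2)) \<longlonglongrightarrow> 0))"

definition compression_code ::
  "(real \<Rightarrow> real) set \<Rightarrow> nat \<Rightarrow> ((real \<Rightarrow> real) \<Rightarrow> nat) \<Rightarrow> (nat \<Rightarrow> (real \<Rightarrow> real)) \<Rightarrow> bool" where
  "compression_code F r Enc Dec \<longleftrightarrow>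
     (\<forall>f\<in>F. Enc f \<in> {1..2^r}) \<and> (\<forall>k\<in>{1..2^r}. Dec k \<in> L2_01)"

definition codebook ::
  "(real \<Rightarrow> real) set \<Rightarrow> ((real \<Rightarrow> real) \<Rightarrow> nat) \<Rightarrow> (nat \<Rightarrow> (real \<Rightarrow> real)) \<Rightarrow> (real \<Rightarrow> real) set" where
  "codebook F Enc Dec = {Dec (Enc f) | f. f \<in> F}"

text \<open>Distortion, as an extended real (it may be infinite).\<close>
definition distortion ::
  "(real \<Rightarrow> real) set \<Rightarrow> ((real \<Rightarrow> real) \<Rightarrow> nat) \<Rightarrow> (nat \<Rightarrow> (real \<Rightarrow> real)) \<Rightarrow> ereal" where
  "distortion F Enc Dec = (SUP f\<in>F. ereal (L2norm01 (\<lambda>t. f t - Dec (Enc f) t)))"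

end

theory Submission
  imports Defs
begin

lemma part_mono:
  assumes "partition01 n ts" "i < j" "j \<le> n"
  shows "ts i < ts j"
  using assms(2,3)
proof (induction j)
  case 0 then show ?case by simp
next
  case (Suc j)
  have "ts j < ts (Suc j)" using assms(1) Suc.prems unfolding partition01_def by auto
  then show ?case using Suc by (cases "i = j") auto
qed

lemma part_mono_le:
  assumes "partition01 n ts" "i \<le> j" "j \<le> n"
  shows "ts i \<le> ts j"
  using part_mono[OF assms(1)] assms(2,3) by (cases "i = j") (auto intro: less_imp_le)

lemma part_range:
  assumes "partition01 n ts" "k \<le> n"
  shows "0 \<le> ts k" "ts k \<le> 1"
proof -
  have "ts 0 \<le> ts k" "ts k \<le> ts n" using part_mono_le[OF assms(1)] assms(2) by auto
  then show "0 \<le> ts k" "ts k \<le> 1" using assms(1) unfolding partition01_def by auto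
qed

lemma part_inj:
  assumes "partition01 n ts" "i \<le> n" "j \<le> n" "ts i = ts j"
  shows "i = j"
  using part_mono[OF assms(1), of i j] part_mono[OF assms(1), of j i] assms
  by (cases i j rule: linorder_cases) auto

lemma step_fun_at:
  assumes "partition01 n ts" "k < n" "ts k \<le> s" "s < ts (Suc k)"
  shows "step_fun n ts cs s = cs k"
proof -
  have "step_fun n ts cs s = (\<Sum>k'<n. if k' = k then cs k else 0)"
    unfolding step_fun_def
  proof (intro sum.cong refl)
    fix k' assume k': "k' \<in> {..<n}"
    show "cs k' * indicator {ts k'..<ts (Suc k')} s = (if k' = k then cs k else 0)"
    proof (cases k' k rule: linorder_cases)
      case less
      then have "ts (Suc k') \<le> ts k" using part_mono_le[OF assms(1), of "Suc k'" k] assms by auto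
      then show ?thesis using less assms by (auto simp: indicator_def)
    next
      case greater
      then have "ts (Suc k) \<le> ts k'" using part_mono_le[OF assms(1), of "Suc k" k'] assms k' by auto
      then show ?thesis using greater assms by (auto simp: indicator_def)
    qed (use assms in \<open>auto simp: indicator_def\<close>)
  qed
  also have "\<dots> = cs k" using assms(2) by (simp add: sum.delta)
  finally show ?thesis .
qed

lemma step_fun_out:
  assumes "partition01 n ts" "s < 0 \<or> 1 \<le> s"
  shows "step_fun n ts cs s = 0"
  unfolding step_fun_def
proof (intro sum.neutral ballI)
  fix k assume "k \<in> {..<n}"
  then have "0 \<le> ts k" "ts (Suc k) \<le> 1" using part_range[OF assms(1)] by auto
  then show "cs k * indicator {ts k..<ts (Suc k)} s = 0" using assms(2) by (auto simp: indicator_def)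
qed

lemma cell_exists:
  assumes "partition01 n ts" "0 \<le> s" "s < 1"
  shows "\<exists>k<n. ts k \<le> s \<and> s < ts (Suc k)"
proof -
  define K where "K = {k. k \<le> n \<and> ts k \<le> s}"
  have fin: "finite K" unfolding K_def by auto
  have "0 \<in> K" using assms unfolding K_def partition01_def by auto
  then have ne: "K \<noteq> {}" by auto
  define k where "k = Max K"
  have kK: "k \<in> K" using Max_in[OF fin ne] k_def by simp
  have kn: "k < n"
  proof -
    have "k \<le> n" "ts k \<le> s" using kK K_def by auto
    moreover have "ts n = 1" using assms(1) partition01_def by auto
    ultimately show ?thesis using assms(3) by (cases "k = n") auto
  qed
  have "\<not> ts (Suc k) \<le> s"
  proof
    assume "ts (Suc k) \<le> s"
    then have "Suc k \<in> K" using kn K_def by auto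
    then have "Suc k \<le> k" using Max_ge[OF fin] k_def by auto
    then show False by simp
  qed
  then show ?thesis using kn kK K_def by auto
qed

lemma step_fun_refine:
  assumes pu: "partition01 m u" and pt: "partition01 n ts"
    and sub: "\<forall>k\<le>n. \<exists>p\<le>m. ts k = u p"
  shows "step_fun n ts cs s = step_fun m u (\<lambda>p. step_fun n ts cs (u p)) s"
proof (cases "s < 0 \<or> 1 \<le> s")
  case True
  then show ?thesis using step_fun_out[OF pu] step_fun_out[OF pt] by metis
next
  case False
  then obtain p where p: "p < m" "u p \<le> s" "s < u (Suc p)" using cell_exists[OF pu, of s] False by (auto simp: not_less)
  obtain k where k: "k < n" "ts k \<le> s" "s < ts (Suc k)" using cell_exists[OF pt, of s] False by (auto simp: not_less)
  obtain a where a: "a \<le> m" "ts k = u a" using sub k by (meson less_imp_le)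
  obtain b where b: "b \<le> m" "ts (Suc k) = u b" using sub k by (meson Suc_leI)
  have "a \<le> p"
  proof (rule ccontr)
    assume "\<not> a \<le> p"
    then have "u (Suc p) \<le> u a" using part_mono_le[OF pu, of "Suc p" a] a by auto
    then show False using p k a by auto
  qed
  then have 1: "ts k \<le> u p" using part_mono_le[OF pu, of a p] a p by auto
  have "p < b"
  proof (rule ccontr)
    assume "\<not> p < b"
    then have "u b \<le> u p" using part_mono_le[OF pu, of b p] p by auto
    then show False using p k b by auto
  qed
  then have 2: "u p < ts (Suc k)" using part_mono[OF pu, of p b] b by auto
  have "step_fun m u (\<lambda>p. step_fun n ts cs (u p)) s = step_fun n ts cs (u p)"
    using step_fun_at[OF pu p] .
  also have "\<dots> = cs k" using step_fun_at[OF pt k(1) 1 2] .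
  also have "\<dots> = step_fun n ts cs s" using step_fun_at[OF pt k] by simp
  finally show ?thesis by simp
qed

lemma sum_blocks:
  fixes g :: "nat \<Rightarrow> real"
  assumes "\<And>k. k < n \<Longrightarrow> a k \<le> a (Suc k)"
  shows "(\<Sum>k<n. \<Sum>p\<in>{a k..<a (Suc k)}. g p) = (\<Sum>p\<in>{a 0..<a n}. g p)"
  using assms
proof (induction n)
  case 0 then show ?case by simp
next
  case (Suc n)
  have mono: "a 0 \<le> a n"
  proof -
    have "\<forall>j\<le>n. a 0 \<le> a j"
    proof (intro allI impI)
      fix j assume "j \<le> n" then show "a 0 \<le> a j"
        using Suc.prems by (induction j) (auto intro: order_trans)
    qed
    then show ?thesis by simp
  qed
  have "(\<Sum>k<Suc n. \<Sum>p\<in>{a k..<a (Suc k)}. g p) = (\<Sum>p\<in>{a 0..<a n}. g p) + (\<Sum>p\<in>{a n..<a (Suc n)}. g p)"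
    using Suc by simp
  also have "\<dots> = (\<Sum>p\<in>{a 0..<a (Suc n)}. g p)"
    using sum.atLeastLessThan_concat[of "a 0" "a n" "a (Suc n)" g] mono Suc.prems by simp
  finally show ?case .
qed

lemma step_ito_refine:
  assumes pu: "partition01 m u" and pt: "partition01 n ts"
    and sub: "\<forall>k\<le>n. \<exists>p\<le>m. ts k = u p"
  shows "step_ito W n ts cs \<omega> = step_ito W m u (\<lambda>p. step_fun n ts cs (u p)) \<omega>"
proof -
  define a where "a k = (SOME p. p \<le> m \<and> ts k = u p)" for k
  have a: "a k \<le> m \<and> ts k = u (a k)" if "k \<le> n" for k
    unfolding a_def using someI_ex[of "\<lambda>p. p \<le> m \<and> ts k = u p"] sub that by blast
  have amono: "a k < a j" if "k < j" "j \<le> n" for k j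
  proof (rule ccontr)
    assume "\<not> a k < a j"
    then have "u (a j) \<le> u (a k)" using part_mono_le[OF pu, of "a j" "a k"] a that by auto
    moreover have "ts k < ts j" using part_mono[OF pt] that by auto
    ultimately show False using a that by auto
  qed
  have a0: "a 0 = 0"
    using part_inj[OF pu, of "a 0" 0] a[of 0] pu pt unfolding partition01_def by auto
  have an: "a n = m"
    using part_inj[OF pu, of "a n" m] a[of n] pu pt unfolding partition01_def by auto
  define F where "F p = W (u p) \<omega>" for p
  define e where "e p = step_fun n ts cs (u p)" for p
  have "step_ito W n ts cs \<omega> = (\<Sum>k<n. cs k * (F (a (Suc k)) - F (a k)))"
    unfolding step_ito_def F_def using a by (intro sum.cong) auto
  also have "\<dots> = (\<Sum>k<n. \<Sum>p\<in>{a k..<a (Suc k)}. e p * (F (Suc p) - F p))"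
  proof (intro sum.cong refl)
    fix k assume k: "k \<in> {..<n}"
    have "cs k * (F (a (Suc k)) - F (a k)) = cs k * (\<Sum>p\<in>{a k..<a (Suc k)}. F (Suc p) - F p)"
      using sum_Suc_diff'[of "a k" "a (Suc k)" F] amono[of k "Suc k"] k by auto
    also have "\<dots> = (\<Sum>p\<in>{a k..<a (Suc k)}. cs k * (F (Suc p) - F p))"
      by (simp add: sum_distrib_left)
    also have "\<dots> = (\<Sum>p\<in>{a k..<a (Suc k)}. e p * (F (Suc p) - F p))"
    proof (intro sum.cong refl)
      fix p assume p: "p \<in> {a k..<a (Suc k)}"
      have pm: "p < m" using p a[of "Suc k"] k by auto
      have 1: "ts k \<le> u p" using part_mono_le[OF pu, of "a k" p] a[of k] p pm k by auto
      have 2: "u p < ts (Suc k)" using part_mono[OF pu, of p "a (Suc k)"] a[of "Suc k"] p k by auto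
      show "cs k * (F (Suc p) - F p) = e p * (F (Suc p) - F p)"
        unfolding e_def using step_fun_at[OF pt _ 1 2] k by simp
    qed
    finally show "cs k * (F (a (Suc k)) - F (a k)) = (\<Sum>p\<in>{a k..<a (Suc k)}. e p * (F (Suc p) - F p))" .
  qed
  also have "\<dots> = (\<Sum>p\<in>{a 0..<a n}. e p * (F (Suc p) - F p))"
    by (rule sum_blocks) (use amono in \<open>auto intro: less_imp_le\<close>)
  also have "\<dots> = step_ito W m u e \<omega>"
    unfolding step_ito_def F_def a0 an by (simp add: atLeast0LessThan)
  finally show ?thesis unfolding e_def .
qed

lemma common_refine:
  assumes pt: "partition01 n ts" and ps: "partition01 n' ts'"
  shows "\<exists>m u. partition01 m u \<and> (\<forall>k\<le>n. \<exists>p\<le>m. ts k = u p) \<and> (\<forall>k\<le>n'. \<exists>p\<le>m. ts' k = u p)"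
proof -
  define T where "T = ts ` {..n} \<union> ts' ` {..n'}"
  define L where "L = sorted_list_of_set T"
  have finT: "finite T" unfolding T_def by auto
  have setL: "set L = T" unfolding L_def using finT by simp
  have sL: "sorted_wrt (<) L" unfolding L_def by (rule strict_sorted_list_of_set)
  have lt: "L ! p < L ! q" if "p < q" "q < length L" for p q
    using sorted_wrt_nth_less[OF sL that] .
  have Trange: "0 \<le> x \<and> x \<le> 1" if "x \<in> T" for x
    using that part_range[OF pt] part_range[OF ps] unfolding T_def by auto
  have inT: "x \<in> T \<Longrightarrow> \<exists>p<length L. L ! p = x" for x
    using setL by (metis in_set_conv_nth)
  have "ts 0 = 0" "ts n = 1" using pt unfolding partition01_def by auto
  then have "0 \<in> T" "1 \<in> T" unfolding T_def by (metis UnI1 atMost_iff image_eqI le0, metis UnI1 atMost_iff image_eqI order_refl)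
  then obtain q0 q1 where q0: "q0 < length L" "L ! q0 = 0" and q1: "q1 < length L" "L ! q1 = 1"
    using inT by blast
  have "q0 \<noteq> q1" using q0 q1 by auto
  then have "q0 < q1 \<or> q1 < q0" by linarith
  then have len: "length L \<ge> 2" using q0 q1 by linarith
  define m where "m = length L - 1"
  have mpos: "m > 0" using len m_def by auto
  have nthT: "p < length L \<Longrightarrow> L ! p \<in> T" for p using setL by auto
  have u0: "L ! 0 = 0"
  proof (cases "q0 = 0")
    case False
    then have "L ! 0 < L ! q0" using lt[of 0 q0] q0 by auto
    moreover have "L ! 0 \<in> T" using nthT[of 0] len by fastforce
    ultimately show ?thesis using q0 Trange by fastforce
  qed (use q0 in auto)
  have um: "L ! m = 1"
  proof (cases "q1 = m")
    case False
    then have "q1 < m" using q1 m_def by auto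
    then have "L ! q1 < L ! m" using lt m_def len by auto
    moreover have "L ! m \<in> T" using nthT[of m] len m_def by auto
    ultimately show ?thesis using q1 Trange by fastforce
  qed (use q1 in auto)
  have part: "partition01 m (\<lambda>p. L ! p)"
    unfolding partition01_def
  proof (intro conjI allI impI)
    fix k assume "k < m"
    then show "L ! k < L ! Suc k" using lt[of k "Suc k"] m_def by auto
  qed (use mpos u0 um in auto)
  have cov: "\<exists>p\<le>m. x = L ! p" if xT: "x \<in> T" for x
  proof -
    obtain p where "p < length L" "L ! p = x" using inT[OF xT] by blast
    then show ?thesis using m_def by (intro exI[of _ p]) auto
  qed
  show ?thesis
  proof (rule exI[of _ m], rule exI[of _ "\<lambda>p. L ! p"], intro conjI part allI impI)
    fix k assume "k \<le> n" then show "\<exists>p\<le>m. ts k = L ! p" using cov unfolding T_def by blast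
  next
    fix k assume "k \<le> n'" then show "\<exists>p\<le>m. ts' k = L ! p" using cov unfolding T_def by blast
  qed
qed


lemma step_fun_diff:
  "step_fun m u e s - step_fun m u e' s = step_fun m u (\<lambda>p. e p - e' p) s"
  unfolding step_fun_def by (simp add: sum_subtractf left_diff_distrib)

lemma step_ito_diff:
  "step_ito W m u e \<omega> - step_ito W m u e' \<omega> = step_ito W m u (\<lambda>p. e p - e' p) \<omega>"
  unfolding step_ito_def by (simp add: sum_subtractf left_diff_distrib)

lemma step_fun_sq:
  assumes pu: "partition01 m u"
  shows "indicator {0..1} s * (step_fun m u e s)\<^sup>2 = (\<Sum>p<m. (e p)\<^sup>2 * indicator {u p..<u (Suc p)} s)"
proof (cases "s < 0 \<or> 1 \<le> s")
  case True
  have "(\<Sum>p<m. (e p)\<^sup>2 * indicator {u p..<u (Suc p)} s) = 0"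
  proof (intro sum.neutral ballI)
    fix p assume "p \<in> {..<m}"
    then have "0 \<le> u p" "u (Suc p) \<le> 1" using part_range[OF pu] by auto
    then show "(e p)\<^sup>2 * indicator {u p..<u (Suc p)} s = 0" using True by (auto simp: indicator_def)
  qed
  then show ?thesis using step_fun_out[OF pu True] by simp
next
  case False
  then obtain k where k: "k < m" "u k \<le> s" "s < u (Suc k)" using cell_exists[OF pu, of s] by (auto simp: not_less)
  have calc: "(\<Sum>p<m. (e p)\<^sup>2 * indicator {u p..<u (Suc p)} s) = (e k)\<^sup>2"
    using step_fun_at[OF pu k, of "\<lambda>p. (e p)\<^sup>2"] unfolding step_fun_def .
  have ind1: "indicator {0..1} s = (1::real)" using False by auto
  show ?thesis unfolding ind1 step_fun_at[OF pu k, of e] by (simp only: mult_1 calc)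
qed

definition L2M :: "'b measure \<Rightarrow> ('b \<Rightarrow> real) \<Rightarrow> bool" where
  "L2M N F \<longleftrightarrow> F \<in> borel_measurable N \<and> integrable N (\<lambda>x. (F x)\<^sup>2)"

lemma L2M_prod_integrable:
  fixes F G :: "'b \<Rightarrow> real"
  assumes "L2M N F" "L2M N G"
  shows "integrable N (\<lambda>x. F x * G x)"
proof (rule Bochner_Integration.integrable_bound[where f="\<lambda>x. (F x)\<^sup>2 + (G x)\<^sup>2"])
  show "integrable N (\<lambda>x. (F x)\<^sup>2 + (G x)\<^sup>2)" using assms unfolding L2M_def by auto
  show "(\<lambda>x. F x * G x) \<in> borel_measurable N" using assms unfolding L2M_def by auto
  show "AE x in N. norm (F x * G x) \<le> norm ((F x)\<^sup>2 + (G x)\<^sup>2)"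
  proof (intro AE_I2)
    fix x
    have "0 \<le> (\<bar>F x\<bar> - \<bar>G x\<bar>)\<^sup>2" by simp
    then have "2 * (\<bar>F x\<bar> * \<bar>G x\<bar>) \<le> (F x)\<^sup>2 + (G x)\<^sup>2"
      unfolding power2_diff by simp
    moreover have "0 \<le> \<bar>F x\<bar> * \<bar>G x\<bar>" by simp
    ultimately have "\<bar>F x * G x\<bar> \<le> (F x)\<^sup>2 + (G x)\<^sup>2"
      unfolding abs_mult by linarith
    then show "norm (F x * G x) \<le> norm ((F x)\<^sup>2 + (G x)\<^sup>2)" by simp
  qed
qed

lemma L2M_add:
  assumes "L2M N F" "L2M N G"
  shows "L2M N (\<lambda>x. F x + G x)"
proof -
  have "integrable N (\<lambda>x. (F x)\<^sup>2 + 2 * (F x * G x) + (G x)\<^sup>2)"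
    using assms L2M_prod_integrable[OF assms] unfolding L2M_def by auto
  moreover have "(\<lambda>x. (F x + G x)\<^sup>2) = (\<lambda>x. (F x)\<^sup>2 + 2 * (F x * G x) + (G x)\<^sup>2)"
    by (simp add: power2_sum fun_eq_iff)
  ultimately show ?thesis using assms unfolding L2M_def by auto
qed

lemma L2M_scale:
  assumes "L2M N F"
  shows "L2M N (\<lambda>x. c * F x)"
  using assms unfolding L2M_def by (auto simp: power_mult_distrib)

lemma L2M_CS:
  assumes "L2M N F" "L2M N G"
  shows "(\<integral>x. F x * G x \<partial>N)\<^sup>2 \<le> (\<integral>x. (F x)\<^sup>2 \<partial>N) * (\<integral>x. (G x)\<^sup>2 \<partial>N)"
proof -
  define A where "A = (\<integral>x. (F x)\<^sup>2 \<partial>N)"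
  define B where "B = (\<integral>x. F x * G x \<partial>N)"
  define C where "C = (\<integral>x. (G x)\<^sup>2 \<partial>N)"
  have iF: "integrable N (\<lambda>x. (F x)\<^sup>2)" and iG: "integrable N (\<lambda>x. (G x)\<^sup>2)"
    using assms unfolding L2M_def by auto
  have iFG: "integrable N (\<lambda>x. F x * G x)" using L2M_prod_integrable[OF assms] .
  have q: "0 \<le> A + 2 * t * B + t\<^sup>2 * C" for t
  proof -
    have "0 \<le> (\<integral>x. (F x + t * G x)\<^sup>2 \<partial>N)" by simp
    also have "(\<integral>x. (F x + t * G x)\<^sup>2 \<partial>N) = (\<integral>x. (F x)\<^sup>2 + (2 * t) * (F x * G x) + t\<^sup>2 * (G x)\<^sup>2 \<partial>N)"
      by (intro Bochner_Integration.integral_cong refl) (simp add: power2_sum power_mult_distrib algebra_simps)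
    also have "\<dots> = A + 2 * t * B + t\<^sup>2 * C"
      using iF iG iFG unfolding A_def B_def C_def by simp
    finally show ?thesis .
  qed
  have C0: "0 \<le> C" unfolding C_def by simp
  show ?thesis
  proof (cases "C = 0")
    case True
    have "B = 0"
    proof (rule ccontr)
      assume "B \<noteq> 0"
      then have "A + 2 * (- (A + 1) / (2 * B)) * B + (- (A + 1) / (2 * B))\<^sup>2 * C = -1"
        using True by (simp add: field_simps)
      then show False using q[of "- (A + 1) / (2 * B)"] by simp
    qed
    then show ?thesis using True unfolding A_def B_def C_def by simp
  next
    case False
    then have Cp: "C > 0" using C0 by simp
    have "0 \<le> A + 2 * (- B / C) * B + (- B / C)\<^sup>2 * C" using q .
    also have "\<dots> = A - B\<^sup>2 / C" using Cp by (simp add: field_simps power2_eq_square)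
    finally have "B\<^sup>2 \<le> A * C" using Cp by (simp add: field_simps)
    then show ?thesis unfolding A_def B_def C_def .
  qed
qed

definition L2n :: "'b measure \<Rightarrow> ('b \<Rightarrow> real) \<Rightarrow> real" where
  "L2n N F = sqrt (\<integral>x. (F x)\<^sup>2 \<partial>N)"

lemma L2n_triangle:
  assumes "L2M N F" "L2M N G"
  shows "L2n N (\<lambda>x. F x + G x) \<le> L2n N F + L2n N G"
proof -
  define A where "A = (\<integral>x. (F x)\<^sup>2 \<partial>N)"
  define B where "B = (\<integral>x. F x * G x \<partial>N)"
  define C where "C = (\<integral>x. (G x)\<^sup>2 \<partial>N)"
  have iF: "integrable N (\<lambda>x. (F x)\<^sup>2)" and iG: "integrable N (\<lambda>x. (G x)\<^sup>2)"
    using assms unfolding L2M_def by auto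
  have iFG: "integrable N (\<lambda>x. F x * G x)" using L2M_prod_integrable[OF assms] .
  have A0: "0 \<le> A" and C0: "0 \<le> C" unfolding A_def C_def by auto
  have "(\<integral>x. (F x + G x)\<^sup>2 \<partial>N) = (\<integral>x. (F x)\<^sup>2 + 2 * (F x * G x) + (G x)\<^sup>2 \<partial>N)"
    by (intro Bochner_Integration.integral_cong refl) (simp add: power2_sum)
  also have "\<dots> = A + 2 * B + C" using iF iG iFG unfolding A_def B_def C_def by simp
  finally have e: "(\<integral>x. (F x + G x)\<^sup>2 \<partial>N) = A + 2 * B + C" .
  have "B\<^sup>2 \<le> A * C" using L2M_CS[OF assms] unfolding A_def B_def C_def .
  then have "\<bar>B\<bar>\<^sup>2 \<le> A * C" by simp
  then have "\<bar>B\<bar> \<le> sqrt (A * C)" by (rule real_le_rsqrt)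
  then have "B \<le> sqrt A * sqrt C" by (simp add: real_sqrt_mult)
  then have "A + 2 * B + C \<le> (sqrt A + sqrt C)\<^sup>2"
    using A0 C0 by (simp add: power2_sum)
  then have "sqrt (A + 2 * B + C) \<le> sqrt A + sqrt C"
    using A0 C0 by (simp add: real_sqrt_le_iff real_le_lsqrt)
  then show ?thesis unfolding L2n_def e A_def C_def by simp
qed

lemma L2n_nonneg: "0 \<le> L2n N F" unfolding L2n_def by simp

definition cut01 :: "(real \<Rightarrow> real) \<Rightarrow> real \<Rightarrow> real" where
  "cut01 f t = indicator {0..1} t * f t"

lemma L2_01_iff: "f \<in> L2_01 \<longleftrightarrow> L2M lborel (cut01 f)"
proof -
  have "(\<lambda>t. indicator {0..1} t *\<^sub>R (f t)\<^sup>2) = (\<lambda>t. (cut01 f t)\<^sup>2)"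
    by (auto simp: cut01_def indicator_def fun_eq_iff)
  then show ?thesis
    unfolding L2_01_def L2M_def set_borel_measurable_def set_integrable_def cut01_def by simp
qed

lemma L2norm01_eq: "L2norm01 f = L2n lborel (cut01 f)"
proof -
  have "(\<lambda>t. indicator {0..1} t *\<^sub>R (f t)\<^sup>2) = (\<lambda>t. (cut01 f t)\<^sup>2)"
    by (auto simp: cut01_def indicator_def fun_eq_iff)
  then show ?thesis unfolding L2norm01_def L2n_def set_lebesgue_integral_def by simp
qed

lemma cut01_add: "cut01 (\<lambda>t. f t + g t) = (\<lambda>x. cut01 f x + cut01 g x)"
  by (simp add: cut01_def distrib_left fun_eq_iff)

lemma cut01_scale: "cut01 (\<lambda>t. c * f t) = (\<lambda>x. c * cut01 f x)"
  by (simp add: cut01_def fun_eq_iff)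

lemma L2_01_add: "f \<in> L2_01 \<Longrightarrow> g \<in> L2_01 \<Longrightarrow> (\<lambda>t. f t + g t) \<in> L2_01"
  unfolding L2_01_iff cut01_add by (rule L2M_add)

lemma L2_01_scale: "f \<in> L2_01 \<Longrightarrow> (\<lambda>t. c * f t) \<in> L2_01"
  unfolding L2_01_iff cut01_scale by (rule L2M_scale)

lemma L2_01_diff: "f \<in> L2_01 \<Longrightarrow> g \<in> L2_01 \<Longrightarrow> (\<lambda>t. f t - g t) \<in> L2_01"
  using L2_01_add[of f "\<lambda>t. (-1) * g t"] L2_01_scale[of g "-1"] by simp

lemma L2norm01_triangle: "f \<in> L2_01 \<Longrightarrow> g \<in> L2_01 \<Longrightarrow> L2norm01 (\<lambda>t. f t + g t) \<le> L2norm01 f + L2norm01 g"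
  unfolding L2norm01_eq L2_01_iff cut01_add by (rule L2n_triangle)


lemma L2norm01_minus: "L2norm01 (\<lambda>t. f t - g t) = L2norm01 (\<lambda>t. g t - f t)"
  unfolding L2norm01_def by (simp add: power2_commute)

lemma L2norm01_sq: fixes f :: "real \<Rightarrow> real" shows "(L2norm01 f)\<^sup>2 = (LINT t:{0..1}|lborel. (f t)\<^sup>2)"
proof -
  have "0 \<le> (LINT t:{0..1}|lborel. (f t)\<^sup>2)"
    unfolding set_lebesgue_integral_def by (rule Bochner_Integration.integral_nonneg) (simp add: indicator_def)
  then show ?thesis unfolding L2norm01_def by simp
qed

lemma L2norm01_nonneg: "0 \<le> L2norm01 f"
proof -
  have "0 \<le> (LINT t:{0..1}|lborel. (f t)\<^sup>2)"
    unfolding set_lebesgue_integral_def by (rule Bochner_Integration.integral_nonneg) (simp add: indicator_def)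
  then show ?thesis unfolding L2norm01_def by simp
qed

lemma step_fun_sq_eq:
  assumes pu: "partition01 m u"
  shows "(\<lambda>s. indicator {0..1} s *\<^sub>R (step_fun m u e s)\<^sup>2) = (\<lambda>s. \<Sum>p<m. (e p)\<^sup>2 * indicator {u p..<u (Suc p)} s)"
  using step_fun_sq[OF pu] by (simp add: fun_eq_iff)

lemma Ico_finite: "emeasure lborel {a..<b::real} < \<infinity>"
  by (rule emeasure_bounded_finite) simp

lemma Ico_int: "integrable lborel (\<lambda>s. c * indicator {a..<b::real} s :: real)"
  by (rule integrable_mult_right[OF integrable_real_indicator[OF _ Ico_finite]]) simp

lemma step_fun_sq_integrable:
  fixes u e :: "nat \<Rightarrow> real"
  shows "integrable lborel (\<lambda>s. \<Sum>p<m. (e p)\<^sup>2 * indicator {u p..<u (Suc p)} s :: real)"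
proof (intro Bochner_Integration.integrable_sum)
  fix p show "integrable lborel (\<lambda>x. (e p)\<^sup>2 * indicator {u p..<u (Suc p)} x :: real)"
    using Ico_int[of "(e p)\<^sup>2" "u p" "u (Suc p)"] by simp
qed

lemma step_fun_meas: "step_fun m u e \<in> borel_measurable lborel"
  unfolding step_fun_def by measurable

lemma step_fun_L2: 
  assumes pu: "partition01 m u"
  shows "step_fun m u e \<in> L2_01"
proof -
  have "integrable lborel (\<lambda>s. indicator {0..1} s *\<^sub>R (step_fun m u e s)\<^sup>2)"
    unfolding step_fun_sq_eq[OF pu] by (rule step_fun_sq_integrable)
  moreover have "(\<lambda>x. indicator {0..1} x *\<^sub>R step_fun m u e x) \<in> borel_measurable lborel"
    using step_fun_meas[of m u e] by measurable
  ultimately show ?thesis unfolding L2_01_def set_borel_measurable_def set_integrable_def by simp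
qed

lemma step_fun_norm:
  assumes pu: "partition01 m u"
  shows "(L2norm01 (step_fun m u e))\<^sup>2 = (\<Sum>p<m. (e p)\<^sup>2 * (u (Suc p) - u p))"
proof -
  have "(L2norm01 (step_fun m u e))\<^sup>2 = (\<integral>s. (\<Sum>p<m. (e p)\<^sup>2 * indicator {u p..<u (Suc p)} s) \<partial>lborel)"
    unfolding L2norm01_sq set_lebesgue_integral_def step_fun_sq_eq[OF pu] ..
  also have "\<dots> = (\<Sum>p<m. (\<integral>s. (e p)\<^sup>2 * indicator {u p..<u (Suc p)} s \<partial>lborel))"
    by (intro Bochner_Integration.integral_sum Ico_int)
  also have "\<dots> = (\<Sum>p<m. (e p)\<^sup>2 * (u (Suc p) - u p))"
  proof (intro sum.cong refl)
    fix p assume "p \<in> {..<m}"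
    then have "u p \<le> u (Suc p)" using pu unfolding partition01_def by (auto intro: less_imp_le)
    then show "(\<integral>s. (e p)\<^sup>2 * indicator {u p..<u (Suc p)} s \<partial>lborel) = (e p)\<^sup>2 * (u (Suc p) - u p)"
      by simp
  qed
  finally show ?thesis .
qed

lemma normal_exp_sq_pointwise:
  fixes s \<mu> x :: real
  assumes s: "s > 0" and a: "2 * \<mu> * s\<^sup>2 < 1"
  shows "normal_density 0 s x * exp (\<mu> * x\<^sup>2)
       = (1 / sqrt (1 - 2 * \<mu> * s\<^sup>2)) * normal_density 0 (s / sqrt (1 - 2 * \<mu> * s\<^sup>2)) x"
proof -
  define a where "a = 1 - 2 * \<mu> * s\<^sup>2"
  have ap: "a > 0" using assms a_def by simp
  have sq: "(s / sqrt a)\<^sup>2 = s\<^sup>2 / a" using ap by (simp add: power_divide)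
  have "normal_density 0 s x * exp (\<mu> * x\<^sup>2) = 1 / sqrt (2 * pi * s\<^sup>2) * (exp (- x\<^sup>2 / (2 * s\<^sup>2)) * exp (\<mu> * x\<^sup>2))"
    unfolding normal_density_def by simp
  also have "exp (- x\<^sup>2 / (2 * s\<^sup>2)) * exp (\<mu> * x\<^sup>2) = exp (- x\<^sup>2 / (2 * s\<^sup>2) + \<mu> * x\<^sup>2)"
    by (rule mult_exp_exp)
  also have "- x\<^sup>2 / (2 * s\<^sup>2) + \<mu> * x\<^sup>2 = - x\<^sup>2 / (2 * (s\<^sup>2 / a))"
    using s ap unfolding a_def by (simp add: field_simps)
  also have "1 / sqrt (2 * pi * s\<^sup>2) = (1 / sqrt a) * (1 / sqrt (2 * pi * (s\<^sup>2 / a)))"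
    using s ap by (simp add: real_sqrt_divide real_sqrt_mult field_simps)
  finally show ?thesis unfolding normal_density_def a_def[symmetric] sq by simp
qed

lemma normal_exp_sq_nn:
  fixes s \<mu> :: real
  assumes s: "s > 0" and a: "2 * \<mu> * s\<^sup>2 < 1"
  shows "(\<integral>\<^sup>+x. ennreal (normal_density 0 s x) * ennreal (exp (\<mu> * x\<^sup>2)) \<partial>lborel)
       = ennreal (1 / sqrt (1 - 2 * \<mu> * s\<^sup>2))"
proof -
  define c where "c = 1 / sqrt (1 - 2 * \<mu> * s\<^sup>2)"
  define s' where "s' = s / sqrt (1 - 2 * \<mu> * s\<^sup>2)"
  have c0: "c \<ge> 0" unfolding c_def using a by simp
  have s'0: "s' > 0" unfolding s'_def using a s by simp
  have "(\<integral>\<^sup>+x. ennreal (normal_density 0 s x) * ennreal (exp (\<mu> * x\<^sup>2)) \<partial>lborel)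
      = (\<integral>\<^sup>+x. ennreal c * ennreal (normal_density 0 s' x) \<partial>lborel)"
    using normal_exp_sq_pointwise[OF assms] c0
    by (intro nn_integral_cong) (simp add: ennreal_mult'[symmetric] c_def s'_def)
  also have "\<dots> = ennreal c * (\<integral>\<^sup>+x. ennreal (normal_density 0 s' x) \<partial>lborel)"
    by (rule nn_integral_cmult) simp
  also have "(\<integral>\<^sup>+x. ennreal (normal_density 0 s' x) \<partial>lborel) = 1"
    using integrable_normal_density[OF s'0] integral_normal_density[OF s'0]
    by (subst nn_integral_eq_integral) auto
  finally show ?thesis unfolding c_def by simp
qed

lemma wiener_incr:
  assumes W: "wiener_process01 M W" and pu: "partition01 m u" and p: "p < m"
  shows "distributed M lborel (\<lambda>\<omega>. W (u (Suc p)) \<omega> - W (u p) \<omega>)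
           (\<lambda>x. ennreal (normal_density 0 (sqrt (u (Suc p) - u p)) x))"
proof -
  have "0 \<le> u p" "u p < u (Suc p)" "u (Suc p) \<le> 1"
    using part_range[OF pu, of p] part_range[OF pu, of "Suc p"] pu p unfolding partition01_def by auto
  then show ?thesis using W unfolding wiener_process01_def by blast
qed

lemma wiener_indep:
  assumes W: "wiener_process01 M W" and pu: "partition01 m u"
  shows "prob_space.indep_vars M (\<lambda>_. borel) (\<lambda>k \<omega>. W (u (Suc k)) \<omega> - W (u k) \<omega>) {..<m}"
proof -
  have "\<forall>k<m. 0 \<le> u k \<and> u k < u (Suc k) \<and> u (Suc k) \<le> 1"
    using part_range[OF pu] pu unfolding partition01_def by (auto simp: Suc_le_eq)
  then show ?thesis using W unfolding wiener_process01_def by blast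
qed

lemma wiener_sum_normal:
  assumes P: "prob_space M" and W: "wiener_process01 M W" and pu: "partition01 m u"
    and v: "(\<Sum>p<m. (e p)\<^sup>2 * (u (Suc p) - u p)) > 0"
  shows "distributed M lborel (\<lambda>\<omega>. \<Sum>p<m. e p * (W (u (Suc p)) \<omega> - W (u p) \<omega>))
           (\<lambda>x. ennreal (normal_density 0 (sqrt (\<Sum>p<m. (e p)\<^sup>2 * (u (Suc p) - u p))) x))"
proof -
  interpret prob_space M by (rule P)
  define I where "I = {p. p < m \<and> e p \<noteq> 0}"
  define X where "X p \<omega> = e p * (W (u (Suc p)) \<omega> - W (u p) \<omega>)" for p \<omega>
  define \<sigma> where "\<sigma> p = \<bar>e p\<bar> * sqrt (u (Suc p) - u p)" for p
  have Isub: "I \<subseteq> {..<m}" unfolding I_def by auto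
  have finI: "finite I" unfolding I_def by auto
  have dpos: "u (Suc p) - u p > 0" if "p < m" for p using pu that unfolding partition01_def by auto
  have Ine: "I \<noteq> {}"
  proof
    assume "I = {}"
    then have "\<forall>p<m. e p = 0" unfolding I_def by auto
    then show False using v by simp
  qed
  have ind: "indep_vars (\<lambda>_. borel) X I"
  proof -
    have "indep_vars (\<lambda>_. borel) (\<lambda>k \<omega>. (\<lambda>y. e k * y) (W (u (Suc k)) \<omega> - W (u k) \<omega>)) {..<m}"
      by (rule indep_vars_compose2[OF wiener_indep[OF W pu]]) auto
    then show ?thesis unfolding X_def by (rule indep_vars_subset[OF _ Isub])
  qed
  have spos: "\<And>p. p \<in> I \<Longrightarrow> 0 < \<sigma> p" unfolding \<sigma>_def I_def using dpos by auto
  have dist: "distributed M lborel (X p) (normal_density 0 (\<sigma> p))" if "p \<in> I" for p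
  proof -
    have pm: "p < m" and ep: "e p \<noteq> 0" using that I_def by auto
    have "distributed M lborel (\<lambda>\<omega>. 0 + e p * (W (u (Suc p)) \<omega> - W (u p) \<omega>))
        (normal_density (0 + e p * 0) (\<bar>e p\<bar> * sqrt (u (Suc p) - u p)))"
      by (rule normal_density_affine[OF wiener_incr[OF W pu pm]]) (use dpos[OF pm] ep in auto)
    then show ?thesis unfolding X_def \<sigma>_def by simp
  qed
  have main: "distributed M lborel (\<lambda>x. \<Sum>i\<in>I. X i x) (normal_density (\<Sum>i\<in>I. 0) (sqrt (\<Sum>i\<in>I. (\<sigma> i)\<^sup>2)))"
    by (rule sum_indep_normal[OF finI Ine ind spos dist])
  have e1: "(\<lambda>x. \<Sum>i\<in>I. X i x) = (\<lambda>\<omega>. \<Sum>p<m. e p * (W (u (Suc p)) \<omega> - W (u p) \<omega>))"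
  proof
    fix \<omega>
    show "(\<Sum>i\<in>I. X i \<omega>) = (\<Sum>p<m. e p * (W (u (Suc p)) \<omega> - W (u p) \<omega>))"
      unfolding X_def by (rule sum.mono_neutral_left) (auto simp: I_def)
  qed
  have e2: "(\<Sum>i\<in>I. (\<sigma> i)\<^sup>2) = (\<Sum>p<m. (e p)\<^sup>2 * (u (Suc p) - u p))"
  proof -
    have "(\<Sum>i\<in>I. (\<sigma> i)\<^sup>2) = (\<Sum>i\<in>I. (e i)\<^sup>2 * (u (Suc i) - u i))"
      by (intro sum.cong refl) (use dpos in \<open>auto simp: \<sigma>_def I_def power_mult_distrib less_imp_le\<close>)
    also have "\<dots> = (\<Sum>p<m. (e p)\<^sup>2 * (u (Suc p) - u p))"
      by (rule sum.mono_neutral_left) (auto simp: I_def)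
    finally show ?thesis .
  qed
  show ?thesis using main unfolding e1 e2 by simp
qed

lemma step_pair_refine:
  assumes p1: "partition01 n1 ts1" and p2: "partition01 n2 ts2"
  obtains m u e where "partition01 m u"
    "\<And>\<omega>. step_ito W n1 ts1 c1 \<omega> - step_ito W n2 ts2 c2 \<omega> = step_ito W m u e \<omega>"
    "(\<lambda>s. step_fun n1 ts1 c1 s - step_fun n2 ts2 c2 s) = step_fun m u e"
proof -
  obtain m u where pu: "partition01 m u" and s1: "\<forall>k\<le>n1. \<exists>p\<le>m. ts1 k = u p"
    and s2: "\<forall>k\<le>n2. \<exists>p\<le>m. ts2 k = u p"
    using common_refine[OF p1 p2] by blast
  define e where "e p = step_fun n1 ts1 c1 (u p) - step_fun n2 ts2 c2 (u p)" for p
  show ?thesis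
  proof (rule that[OF pu])
    fix \<omega>
    show "step_ito W n1 ts1 c1 \<omega> - step_ito W n2 ts2 c2 \<omega> = step_ito W m u e \<omega>"
      unfolding step_ito_refine[OF pu p1 s1] step_ito_refine[OF pu p2 s2] step_ito_diff e_def ..
  next
    show "(\<lambda>s. step_fun n1 ts1 c1 s - step_fun n2 ts2 c2 s) = step_fun m u e"
    proof
      fix s show "step_fun n1 ts1 c1 s - step_fun n2 ts2 c2 s = step_fun m u e s"
        unfolding step_fun_refine[OF pu p1 s1, of c1 s] step_fun_refine[OF pu p2 s2, of c2 s] step_fun_diff e_def ..
    qed
  qed
qed

lemma step_pair_mgf:
  assumes P: "prob_space M" and W: "wiener_process01 M W"
    and p1: "partition01 n1 ts1" and p2: "partition01 n2 ts2"
    and v: "v = (L2norm01 (\<lambda>s. step_fun n1 ts1 c1 s - step_fun n2 ts2 c2 s))\<^sup>2"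
    and mu: "2 * \<mu> * v < 1"
  shows "(\<integral>\<^sup>+\<omega>. ennreal (exp (\<mu> * (step_ito W n1 ts1 c1 \<omega> - step_ito W n2 ts2 c2 \<omega>)\<^sup>2)) \<partial>M)
           = ennreal (1 / sqrt (1 - 2 * \<mu> * v))"
proof -
  interpret prob_space M by (rule P)
  obtain m u e where pu: "partition01 m u"
    and hS: "\<And>\<omega>. step_ito W n1 ts1 c1 \<omega> - step_ito W n2 ts2 c2 \<omega> = step_ito W m u e \<omega>"
    and hF: "(\<lambda>s. step_fun n1 ts1 c1 s - step_fun n2 ts2 c2 s) = step_fun m u e"
    using step_pair_refine[OF p1 p2] by metis
  have vs: "v = (\<Sum>p<m. (e p)\<^sup>2 * (u (Suc p) - u p))"
    unfolding v hF step_fun_norm[OF pu] ..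
  have dpos: "u (Suc p) - u p > 0" if "p < m" for p using pu that unfolding partition01_def by auto
  show ?thesis
  proof (cases "v > 0")
    case True
    have dist: "distributed M lborel (step_ito W m u e) (\<lambda>x. ennreal (normal_density 0 (sqrt v) x))"
      using wiener_sum_normal[OF P W pu True[unfolded vs]] unfolding vs step_ito_def[abs_def] .
    have "(\<integral>\<^sup>+\<omega>. ennreal (exp (\<mu> * (step_ito W m u e \<omega>)\<^sup>2)) \<partial>M)
        = (\<integral>\<^sup>+x. ennreal (normal_density 0 (sqrt v) x) * ennreal (exp (\<mu> * x\<^sup>2)) \<partial>lborel)"
      by (rule distributed_nn_integral[OF dist, symmetric]) simp
    also have "\<dots> = ennreal (1 / sqrt (1 - 2 * \<mu> * (sqrt v)\<^sup>2))"
      by (rule normal_exp_sq_nn) (use True mu in auto)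
    finally show ?thesis unfolding hS using True by simp
  next
    case False
    have "v \<ge> 0" unfolding v by simp
    then have v0: "v = 0" using False by simp
    have nn: "\<forall>p\<in>{..<m}. 0 \<le> (e p)\<^sup>2 * (u (Suc p) - u p)"
    proof
      fix p assume "p \<in> {..<m}"
      then have "0 \<le> u (Suc p) - u p" using dpos[of p] by simp
      then show "0 \<le> (e p)\<^sup>2 * (u (Suc p) - u p)" by (intro mult_nonneg_nonneg) auto
    qed
    have "\<forall>p\<in>{..<m}. (e p)\<^sup>2 * (u (Suc p) - u p) = 0"
      using v0 sum_nonneg_eq_0_iff[of "{..<m}" "\<lambda>p. (e p)\<^sup>2 * (u (Suc p) - u p)"] nn unfolding vs by auto
    then have e0: "\<forall>p<m. e p = 0" using dpos by (metis lessThan_iff mult_eq_0_iff power_eq_0_iff less_irrefl)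
    have "\<And>\<omega>. step_ito W m u e \<omega> = 0" unfolding step_ito_def using e0 by simp
    then show ?thesis unfolding hS v0 by (simp add: emeasure_space_1)
  qed
qed

definition path_incr :: "(real \<Rightarrow> real) \<Rightarrow> nat \<Rightarrow> (nat \<Rightarrow> real) \<Rightarrow> (nat \<Rightarrow> real) \<Rightarrow> real" where
  "path_incr x n ts cs = (\<Sum>k<n. cs k * (x (ts (Suc k)) - x (ts k)))"

lemma path_incr_meas:
  assumes pt: "partition01 n ts"
  shows "(\<lambda>x. path_incr x n ts cs) \<in> borel_measurable (PiM {0..1} (\<lambda>_. borel))"
  unfolding path_incr_def
proof (intro borel_measurable_sum borel_measurable_times borel_measurable_diff borel_measurable_const)
  fix k assume k: "k \<in> {..<n}"
  have "ts (Suc k) \<in> {0..1}" "ts k \<in> {0..1}" using part_range[OF pt, of k] part_range[OF pt, of "Suc k"] k by auto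
  then show "(\<lambda>x. x (ts (Suc k))) \<in> borel_measurable (PiM {0..1} (\<lambda>_. borel))"
    "(\<lambda>x. x (ts k)) \<in> borel_measurable (PiM {0..1} (\<lambda>_. borel))"
    by (auto intro: measurable_component_singleton)
qed

lemma step_ito_path:
  assumes pt: "partition01 n ts"
  shows "step_ito W n ts cs \<omega> = path_incr (\<lambda>t\<in>{0..1}. W t \<omega>) n ts cs"
  unfolding step_ito_def path_incr_def
proof (intro sum.cong refl)
  fix k assume k: "k \<in> {..<n}"
  have "ts (Suc k) \<in> {0..1}" "ts k \<in> {0..1}" using part_range[OF pt, of k] part_range[OF pt, of "Suc k"] k by auto
  then show "cs k * (W (ts (Suc k)) \<omega> - W (ts k) \<omega>) = cs k * ((\<lambda>t\<in>{0..1}. W t \<omega>) (ts (Suc k)) - (\<lambda>t\<in>{0..1}. W t \<omega>) (ts k))"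
    by simp
qed

lemma step_ito_meas:
  assumes W: "\<forall>t\<in>{0..1}. W t \<in> borel_measurable M" and pt: "partition01 n ts"
  shows "step_ito W n ts cs \<in> borel_measurable M"
  unfolding step_ito_def[abs_def]
proof (intro borel_measurable_sum borel_measurable_times borel_measurable_diff borel_measurable_const)
  fix k assume k: "k \<in> {..<n}"
  have "ts (Suc k) \<in> {0..1}" "ts k \<in> {0..1}" using part_range[OF pt, of k] part_range[OF pt, of "Suc k"] k by auto
  then show "W (ts (Suc k)) \<in> borel_measurable M" "W (ts k) \<in> borel_measurable M" using W by auto
qed

lemma indep_prod_mgf:
  fixes d :: nat and W :: "nat \<Rightarrow> real \<Rightarrow> 'a \<Rightarrow> real"
  assumes P: "prob_space M"
    and ind: "prob_space.indep_vars M (\<lambda>_. PiM {0..1} (\<lambda>_. borel)) (\<lambda>i \<omega>. \<lambda>t\<in>{0..1}. W i t \<omega>) {..<d}"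
    and parts: "\<forall>i<d. partition01 (n1 i) (t1 i) \<and> partition01 (n2 i) (t2 i)"
  shows "(\<integral>\<^sup>+\<omega>. ennreal (exp (\<mu> * (\<Sum>i<d. (step_ito (W i) (n1 i) (t1 i) (c1 i) \<omega> - step_ito (W i) (n2 i) (t2 i) (c2 i) \<omega>)\<^sup>2))) \<partial>M)
    = (\<Prod>i<d. \<integral>\<^sup>+\<omega>. ennreal (exp (\<mu> * (step_ito (W i) (n1 i) (t1 i) (c1 i) \<omega> - step_ito (W i) (n2 i) (t2 i) (c2 i) \<omega>)\<^sup>2)) \<partial>M)"
proof -
  interpret prob_space M by (rule P)
  define D where "D i \<omega> = step_ito (W i) (n1 i) (t1 i) (c1 i) \<omega> - step_ito (W i) (n2 i) (t2 i) (c2 i) \<omega>" for i \<omega>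
  define Y where "Y i x = ennreal (exp (\<mu> * (path_incr x (n1 i) (t1 i) (c1 i) - path_incr x (n2 i) (t2 i) (c2 i))\<^sup>2))" for i x
  have DY: "ennreal (exp (\<mu> * (D i \<omega>)\<^sup>2)) = Y i (\<lambda>t\<in>{0..1}. W i t \<omega>)" if "i < d" for i \<omega>
    unfolding D_def Y_def using parts that by (simp add: step_ito_path)
  have indY: "indep_vars (\<lambda>_. borel) (\<lambda>i \<omega>. Y i (\<lambda>t\<in>{0..1}. W i t \<omega>)) {..<d}"
  proof (rule indep_vars_compose2[OF ind])
    fix i assume "i \<in> {..<d}"
    then have "partition01 (n1 i) (t1 i)" "partition01 (n2 i) (t2 i)" using parts by auto
    note m1 = path_incr_meas[OF this(1), of "c1 i"] and m2 = path_incr_meas[OF this(2), of "c2 i"]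
    show "Y i \<in> borel_measurable (PiM {0..1} (\<lambda>_. borel))"
      unfolding Y_def using m1 m2 by measurable
  qed
  have "(\<integral>\<^sup>+\<omega>. ennreal (exp (\<mu> * (\<Sum>i<d. (D i \<omega>)\<^sup>2))) \<partial>M) = (\<integral>\<^sup>+\<omega>. (\<Prod>i<d. Y i (\<lambda>t\<in>{0..1}. W i t \<omega>)) \<partial>M)"
  proof (intro nn_integral_cong)
    fix \<omega>
    have "ennreal (exp (\<mu> * (\<Sum>i<d. (D i \<omega>)\<^sup>2))) = ennreal (\<Prod>i<d. exp (\<mu> * (D i \<omega>)\<^sup>2))"
      unfolding sum_distrib_left by (subst exp_sum) auto
    also have "\<dots> = (\<Prod>i<d. ennreal (exp (\<mu> * (D i \<omega>)\<^sup>2)))" by (simp add: prod_ennreal)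
    also have "\<dots> = (\<Prod>i<d. Y i (\<lambda>t\<in>{0..1}. W i t \<omega>))" using DY by (intro prod.cong) auto
    finally show "ennreal (exp (\<mu> * (\<Sum>i<d. (D i \<omega>)\<^sup>2))) = (\<Prod>i<d. Y i (\<lambda>t\<in>{0..1}. W i t \<omega>))" .
  qed
  also have "\<dots> = (\<Prod>i<d. \<integral>\<^sup>+\<omega>. Y i (\<lambda>t\<in>{0..1}. W i t \<omega>) \<partial>M)"
    using indY by (intro indep_vars_nn_integral) auto
  also have "\<dots> = (\<Prod>i<d. \<integral>\<^sup>+\<omega>. ennreal (exp (\<mu> * (D i \<omega>)\<^sup>2)) \<partial>M)"
    using DY by (intro prod.cong refl nn_integral_cong) auto
  finally show ?thesis unfolding D_def .
qed

lemma L2norm01_uminus: "L2norm01 (\<lambda>t. (-1) * y t) = L2norm01 y"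
  unfolding L2norm01_def by simp

lemma L2norm01_triangle_diff:
  assumes "x \<in> L2_01" "y \<in> L2_01"
  shows "L2norm01 (\<lambda>t. x t - y t) \<le> L2norm01 x + L2norm01 y"
  using L2norm01_triangle[OF assms(1) L2_01_scale[OF assms(2), of "-1"]] L2norm01_uminus[of y] by simp

lemma L2_diff_close:
  assumes p: "p \<in> L2_01" and q: "q \<in> L2_01" and r: "r \<in> L2_01" and s: "s \<in> L2_01"
  shows "\<bar>L2norm01 (\<lambda>t. p t - q t) - L2norm01 (\<lambda>t. r t - s t)\<bar> \<le> L2norm01 (\<lambda>t. p t - r t) + L2norm01 (\<lambda>t. q t - s t)"
proof -
  have pq: "(\<lambda>t. p t - q t) \<in> L2_01" and rs: "(\<lambda>t. r t - s t) \<in> L2_01"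
    and pr: "(\<lambda>t. p t - r t) \<in> L2_01" and qs: "(\<lambda>t. q t - s t) \<in> L2_01"
    using L2_01_diff assms by auto
  have "L2norm01 (\<lambda>t. p t - q t) = L2norm01 (\<lambda>t. (r t - s t) + ((p t - r t) - (q t - s t)))"
    by (simp add: algebra_simps)
  also have "\<dots> \<le> L2norm01 (\<lambda>t. r t - s t) + L2norm01 (\<lambda>t. (p t - r t) - (q t - s t))"
    by (rule L2norm01_triangle[OF rs L2_01_diff[OF pr qs]])
  also have "L2norm01 (\<lambda>t. (p t - r t) - (q t - s t)) \<le> L2norm01 (\<lambda>t. p t - r t) + L2norm01 (\<lambda>t. q t - s t)"
    by (rule L2norm01_triangle_diff[OF pr qs])
  finally have 1: "L2norm01 (\<lambda>t. p t - q t) \<le> L2norm01 (\<lambda>t. r t - s t) + (L2norm01 (\<lambda>t. p t - r t) + L2norm01 (\<lambda>t. q t - s t))"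
    by simp
  have "L2norm01 (\<lambda>t. r t - s t) = L2norm01 (\<lambda>t. (p t - q t) + ((q t - s t) - (p t - r t)))"
    by (simp add: algebra_simps)
  also have "\<dots> \<le> L2norm01 (\<lambda>t. p t - q t) + L2norm01 (\<lambda>t. (q t - s t) - (p t - r t))"
    by (rule L2norm01_triangle[OF pq L2_01_diff[OF qs pr]])
  also have "L2norm01 (\<lambda>t. (q t - s t) - (p t - r t)) \<le> L2norm01 (\<lambda>t. q t - s t) + L2norm01 (\<lambda>t. p t - r t)"
    by (rule L2norm01_triangle_diff[OF qs pr])
  finally have 2: "L2norm01 (\<lambda>t. r t - s t) \<le> L2norm01 (\<lambda>t. p t - q t) + (L2norm01 (\<lambda>t. p t - r t) + L2norm01 (\<lambda>t. q t - s t))"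
    by simp
  show ?thesis using 1 2 by linarith
qed

lemma approx_norm_conv:
  assumes g: "g \<in> L2_01" and h: "h \<in> L2_01"
    and p1: "\<forall>j. partition01 (n1 j) (t1 j)" and p2: "\<forall>j. partition01 (n2 j) (t2 j)"
    and c1: "(\<lambda>j. L2norm01 (\<lambda>s. g s - step_fun (n1 j) (t1 j) (c1 j) s)) \<longlonglongrightarrow> 0"
    and c2: "(\<lambda>j. L2norm01 (\<lambda>s. h s - step_fun (n2 j) (t2 j) (c2 j) s)) \<longlonglongrightarrow> 0"
  shows "(\<lambda>j. (L2norm01 (\<lambda>s. step_fun (n1 j) (t1 j) (c1 j) s - step_fun (n2 j) (t2 j) (c2 j) s))\<^sup>2)
           \<longlonglongrightarrow> (L2norm01 (\<lambda>t. g t - h t))\<^sup>2"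
proof -
  define a where "a j = L2norm01 (\<lambda>s. step_fun (n1 j) (t1 j) (c1 j) s - step_fun (n2 j) (t2 j) (c2 j) s)" for j
  define \<sigma> where "\<sigma> = L2norm01 (\<lambda>t. g t - h t)"
  have "(\<lambda>j. a j - \<sigma>) \<longlonglongrightarrow> 0"
  proof (rule Lim_null_comparison)
    show "\<forall>\<^sub>F j in sequentially. norm (a j - \<sigma>) \<le> L2norm01 (\<lambda>s. g s - step_fun (n1 j) (t1 j) (c1 j) s) + L2norm01 (\<lambda>s. h s - step_fun (n2 j) (t2 j) (c2 j) s)"
    proof (intro always_eventually allI)
      fix j
      have s1: "step_fun (n1 j) (t1 j) (c1 j) \<in> L2_01" using step_fun_L2 p1 by auto
      have s2: "step_fun (n2 j) (t2 j) (c2 j) \<in> L2_01" using step_fun_L2 p2 by auto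
      have "\<bar>a j - \<sigma>\<bar> \<le> L2norm01 (\<lambda>t. step_fun (n1 j) (t1 j) (c1 j) t - g t) + L2norm01 (\<lambda>t. step_fun (n2 j) (t2 j) (c2 j) t - h t)"
        unfolding a_def \<sigma>_def using L2_diff_close[OF s1 s2 g h] by simp
      then show "norm (a j - \<sigma>) \<le> L2norm01 (\<lambda>s. g s - step_fun (n1 j) (t1 j) (c1 j) s) + L2norm01 (\<lambda>s. h s - step_fun (n2 j) (t2 j) (c2 j) s)"
        by (simp add: L2norm01_minus[of "step_fun (n1 j) (t1 j) (c1 j)"] L2norm01_minus[of "step_fun (n2 j) (t2 j) (c2 j)"])
    qed
    show "(\<lambda>j. L2norm01 (\<lambda>s. g s - step_fun (n1 j) (t1 j) (c1 j) s) + L2norm01 (\<lambda>s. h s - step_fun (n2 j) (t2 j) (c2 j) s)) \<longlonglongrightarrow> 0"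
      using tendsto_add[OF c1 c2] by simp
  qed
  then have "a \<longlonglongrightarrow> \<sigma>" by (simp add: LIM_zero_iff)
  then have "(\<lambda>j. (a j)\<^sup>2) \<longlonglongrightarrow> \<sigma>\<^sup>2" by (intro tendsto_power)
  then show ?thesis unfolding a_def \<sigma>_def .
qed

lemma sq_diff_conv:
  fixes a b :: "'a \<Rightarrow> real" and s t :: "nat \<Rightarrow> 'a \<Rightarrow> real"
  assumes [measurable]: "a \<in> borel_measurable M" "b \<in> borel_measurable M"
    "\<And>j. s j \<in> borel_measurable M" "\<And>j. t j \<in> borel_measurable M"
    and ia: "\<And>j. integrable M (\<lambda>\<omega>. (a \<omega> - s j \<omega>)\<^sup>2)" and ib: "\<And>j. integrable M (\<lambda>\<omega>. (b \<omega> - t j \<omega>)\<^sup>2)"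
    and ca: "(\<lambda>j. \<integral>\<omega>. (a \<omega> - s j \<omega>)\<^sup>2 \<partial>M) \<longlonglongrightarrow> 0"
    and cb: "(\<lambda>j. \<integral>\<omega>. (b \<omega> - t j \<omega>)\<^sup>2 \<partial>M) \<longlonglongrightarrow> 0"
  shows "integrable M (\<lambda>\<omega>. ((a \<omega> - b \<omega>) - (s j \<omega> - t j \<omega>))\<^sup>2)"
    and "(\<lambda>j. \<integral>\<omega>. ((a \<omega> - b \<omega>) - (s j \<omega> - t j \<omega>))\<^sup>2 \<partial>M) \<longlonglongrightarrow> 0"
proof -
  have bnd: "((a \<omega> - b \<omega>) - (s j \<omega> - t j \<omega>))\<^sup>2 \<le> 2 * (a \<omega> - s j \<omega>)\<^sup>2 + 2 * (b \<omega> - t j \<omega>)\<^sup>2" for \<omega> j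
  proof -
    have "0 \<le> ((a \<omega> - s j \<omega>) + (b \<omega> - t j \<omega>))\<^sup>2" by simp
    then show ?thesis by (simp add: power2_eq_square algebra_simps)
  qed
  have int: "integrable M (\<lambda>\<omega>. ((a \<omega> - b \<omega>) - (s j \<omega> - t j \<omega>))\<^sup>2)" for j
  proof (rule Bochner_Integration.integrable_bound[where f="\<lambda>\<omega>. 2 * (a \<omega> - s j \<omega>)\<^sup>2 + 2 * (b \<omega> - t j \<omega>)\<^sup>2"])
    show "integrable M (\<lambda>\<omega>. 2 * (a \<omega> - s j \<omega>)\<^sup>2 + 2 * (b \<omega> - t j \<omega>)\<^sup>2)" using ia ib by auto
    show "(\<lambda>\<omega>. ((a \<omega> - b \<omega>) - (s j \<omega> - t j \<omega>))\<^sup>2) \<in> borel_measurable M" by measurable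
    show "AE \<omega> in M. norm (((a \<omega> - b \<omega>) - (s j \<omega> - t j \<omega>))\<^sup>2) \<le> norm (2 * (a \<omega> - s j \<omega>)\<^sup>2 + 2 * (b \<omega> - t j \<omega>)\<^sup>2)"
      using bnd by (intro AE_I2) simp
  qed
  then show "integrable M (\<lambda>\<omega>. ((a \<omega> - b \<omega>) - (s j \<omega> - t j \<omega>))\<^sup>2)" .
  show "(\<lambda>j. \<integral>\<omega>. ((a \<omega> - b \<omega>) - (s j \<omega> - t j \<omega>))\<^sup>2 \<partial>M) \<longlonglongrightarrow> 0"
  proof (rule tendsto_sandwich[where f="\<lambda>_. 0" and h="\<lambda>j. 2 * (\<integral>\<omega>. (a \<omega> - s j \<omega>)\<^sup>2 \<partial>M) + 2 * (\<integral>\<omega>. (b \<omega> - t j \<omega>)\<^sup>2 \<partial>M)"])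
    show "\<forall>\<^sub>F j in sequentially. 0 \<le> (\<integral>\<omega>. ((a \<omega> - b \<omega>) - (s j \<omega> - t j \<omega>))\<^sup>2 \<partial>M)" by simp
    show "\<forall>\<^sub>F j in sequentially. (\<integral>\<omega>. ((a \<omega> - b \<omega>) - (s j \<omega> - t j \<omega>))\<^sup>2 \<partial>M) \<le> 2 * (\<integral>\<omega>. (a \<omega> - s j \<omega>)\<^sup>2 \<partial>M) + 2 * (\<integral>\<omega>. (b \<omega> - t j \<omega>)\<^sup>2 \<partial>M)"
    proof (intro always_eventually allI)
      fix j
      have "(\<integral>\<omega>. ((a \<omega> - b \<omega>) - (s j \<omega> - t j \<omega>))\<^sup>2 \<partial>M) \<le> (\<integral>\<omega>. 2 * (a \<omega> - s j \<omega>)\<^sup>2 + 2 * (b \<omega> - t j \<omega>)\<^sup>2 \<partial>M)"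
        using int ia ib bnd by (intro integral_mono) auto
      also have "\<dots> = 2 * (\<integral>\<omega>. (a \<omega> - s j \<omega>)\<^sup>2 \<partial>M) + 2 * (\<integral>\<omega>. (b \<omega> - t j \<omega>)\<^sup>2 \<partial>M)"
        using ia ib by simp
      finally show "(\<integral>\<omega>. ((a \<omega> - b \<omega>) - (s j \<omega> - t j \<omega>))\<^sup>2 \<partial>M) \<le> 2 * (\<integral>\<omega>. (a \<omega> - s j \<omega>)\<^sup>2 \<partial>M) + 2 * (\<integral>\<omega>. (b \<omega> - t j \<omega>)\<^sup>2 \<partial>M)" .
    qed
    show "(\<lambda>_. 0::real) \<longlonglongrightarrow> 0" by simp
    show "(\<lambda>j. 2 * (\<integral>\<omega>. (a \<omega> - s j \<omega>)\<^sup>2 \<partial>M) + 2 * (\<integral>\<omega>. (b \<omega> - t j \<omega>)\<^sup>2 \<partial>M)) \<longlonglongrightarrow> 0"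
      using tendsto_add[OF tendsto_mult_left[OF ca, of 2] tendsto_mult_left[OF cb, of 2]] by simp
  qed
qed

definition ito_approx where
  "ito_approx M W f X x \<longleftrightarrow>
     (\<forall>j. partition01 (fst x j) (fst (snd x) j)) \<and>
     ((\<lambda>j. L2norm01 (\<lambda>s. f s - step_fun (fst x j) (fst (snd x) j) (snd (snd x) j) s)) \<longlonglongrightarrow> 0) \<and>
     (\<forall>j. integrable M (\<lambda>\<omega>. (X \<omega> - step_ito W (fst x j) (fst (snd x) j) (snd (snd x) j) \<omega>)\<^sup>2)) \<and>
     ((\<lambda>j. integral\<^sup>L M (\<lambda>\<omega>. (X \<omega> - step_ito W (fst x j) (fst (snd x) j) (snd (snd x) j) \<omega>)\<^sup>2)) \<longlonglongrightarrow> 0)"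

lemma ito_approx_ex:
  assumes "is_ito_integral M W f X"
  shows "X \<in> borel_measurable M" "\<exists>x. ito_approx M W f X x"
proof -
  show "X \<in> borel_measurable M" using assms unfolding is_ito_integral_def by auto
  from assms obtain n ts cs where "(\<forall>j. partition01 (n j) (ts j)) \<and>
        ((\<lambda>j. L2norm01 (\<lambda>s. f s - step_fun (n j) (ts j) (cs j) s)) \<longlonglongrightarrow> 0) \<and>
        (\<forall>j. integrable M (\<lambda>\<omega>. (X \<omega> - step_ito W (n j) (ts j) (cs j) \<omega>)\<^sup>2)) \<and>
        ((\<lambda>j. integral\<^sup>L M (\<lambda>\<omega>. (X \<omega> - step_ito W (n j) (ts j) (cs j) \<omega>)\<^sup>2)) \<longlonglongrightarrow> 0)"
    unfolding is_ito_integral_def by blast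
  then show "\<exists>x. ito_approx M W f X x"
    by (intro exI[of _ "(n, ts, cs)"]) (simp add: ito_approx_def)
qed

lemma ito_mgf:
  fixes d :: nat and W :: "nat \<Rightarrow> real \<Rightarrow> 'a \<Rightarrow> real" and A :: "nat \<Rightarrow> (real \<Rightarrow> real) \<Rightarrow> 'a \<Rightarrow> real"
  assumes P: "prob_space M" and Wi: "\<forall>i<d. wiener_process01 M (W i)"
    and ind: "prob_space.indep_vars M (\<lambda>_. PiM {0..1} (\<lambda>_. borel)) (\<lambda>i \<omega>. \<lambda>t\<in>{0..1}. W i t \<omega>) {..<d}"
    and Ai: "\<forall>i<d. \<forall>f\<in>L2_01. is_ito_integral M (W i) f (A i f)"
    and g: "g \<in> L2_01" and h: "h \<in> L2_01"
    and mu: "2 * \<mu> * (L2norm01 (\<lambda>t. g t - h t))\<^sup>2 < 1"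
  shows "(\<integral>\<^sup>+\<omega>. ennreal (exp (\<mu> * (\<Sum>i<d. (A i g \<omega> - A i h \<omega>)\<^sup>2))) \<partial>M)
           \<le> ennreal ((1 / sqrt (1 - 2 * \<mu> * (L2norm01 (\<lambda>t. g t - h t))\<^sup>2)) ^ d)"
proof -
  interpret prob_space M by (rule P)
  define \<sigma>2 where "\<sigma>2 = (L2norm01 (\<lambda>t. g t - h t))\<^sup>2"
  have "\<forall>i\<in>{..<d}. \<exists>x. ito_approx M (W i) g (A i g) x" using Ai g ito_approx_ex by blast
  then obtain Fg where Fg: "\<forall>i\<in>{..<d}. ito_approx M (W i) g (A i g) (Fg i)" by (metis bchoice)
  have "\<forall>i\<in>{..<d}. \<exists>x. ito_approx M (W i) h (A i h) x" using Ai h ito_approx_ex by blast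
  then obtain Fh where Fh: "\<forall>i\<in>{..<d}. ito_approx M (W i) h (A i h) (Fh i)" by (metis bchoice)
  define ng where "ng i = fst (Fg i)" for i
  define tg where "tg i = fst (snd (Fg i))" for i
  define cg where "cg i = snd (snd (Fg i))" for i
  define nh where "nh i = fst (Fh i)" for i
  define th where "th i = fst (snd (Fh i))" for i
  define ch where "ch i = snd (snd (Fh i))" for i
  define Sg where "Sg i j \<omega> = step_ito (W i) (ng i j) (tg i j) (cg i j) \<omega>" for i j \<omega>
  define Sh where "Sh i j \<omega> = step_ito (W i) (nh i j) (th i j) (ch i j) \<omega>" for i j \<omega>
  define S where "S i j \<omega> = Sg i j \<omega> - Sh i j \<omega>" for i j \<omega>
  define Y where "Y i \<omega> = A i g \<omega> - A i h \<omega>" for i \<omega>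
  define v where "v i j = (L2norm01 (\<lambda>s. step_fun (ng i j) (tg i j) (cg i j) s - step_fun (nh i j) (th i j) (ch i j) s))\<^sup>2" for i j
  have pg: "partition01 (ng i j) (tg i j)" if "i < d" for i j
    using Fg that unfolding ito_approx_def ng_def tg_def by auto
  have ph: "partition01 (nh i j) (th i j)" if "i < d" for i j
    using Fh that unfolding ito_approx_def nh_def th_def by auto
  have Wm: "\<forall>t\<in>{0..1}. W i t \<in> borel_measurable M" if "i < d" for i
    using Wi that unfolding wiener_process01_def by auto
  have vconv: "(\<lambda>j. v i j) \<longlonglongrightarrow> \<sigma>2" if i: "i < d" for i
    unfolding v_def \<sigma>2_def
    by (rule approx_norm_conv[OF g h])
       (use Fg Fh i pg ph in \<open>auto simp: ito_approx_def ng_def tg_def cg_def nh_def th_def ch_def\<close>)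
  have L2i: "integrable M (\<lambda>\<omega>. (Y i \<omega> - S i j \<omega>)\<^sup>2) \<and> ((\<lambda>j. \<integral>\<omega>. (Y i \<omega> - S i j \<omega>)\<^sup>2 \<partial>M) \<longlonglongrightarrow> 0)"
    if i: "i < d" for i j
  proof -
    have "is_ito_integral M (W i) g (A i g)" "is_ito_integral M (W i) h (A i h)" using Ai g h i by auto
    note ag = ito_approx_ex(1)[OF this(1)] and ah = ito_approx_ex(1)[OF this(2)]
    have sg: "\<And>j. Sg i j \<in> borel_measurable M" unfolding Sg_def[abs_def]
      using step_ito_meas[OF Wm[OF i] pg[OF i]] by auto
    have sh: "\<And>j. Sh i j \<in> borel_measurable M" unfolding Sh_def[abs_def]
      using step_ito_meas[OF Wm[OF i] ph[OF i]] by auto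
    have fg: "ito_approx M (W i) g (A i g) (Fg i)" and fh: "ito_approx M (W i) h (A i h) (Fh i)"
      using Fg Fh i by auto
    note X = sq_diff_conv[OF ag ah sg sh]
    show ?thesis unfolding Y_def S_def
      by (rule conjI; rule X) (use fg fh in \<open>auto simp: ito_approx_def Sg_def Sh_def ng_def tg_def cg_def nh_def th_def ch_def\<close>)
  qed
  define U where "U j \<omega> = (\<Sum>i<d. (Y i \<omega> - S i j \<omega>)\<^sup>2)" for j \<omega>
  have Uint: "integrable M (U j)" for j unfolding U_def[abs_def] using L2i by auto
  have Uconv: "(\<lambda>j. \<integral>\<omega>. norm (U j \<omega>) \<partial>M) \<longlonglongrightarrow> 0"
  proof -
    have "(\<lambda>j. \<integral>\<omega>. norm (U j \<omega>) \<partial>M) = (\<lambda>j. \<Sum>i<d. \<integral>\<omega>. (Y i \<omega> - S i j \<omega>)\<^sup>2 \<partial>M)"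
    proof
      fix j
      have "(\<integral>\<omega>. norm (U j \<omega>) \<partial>M) = (\<integral>\<omega>. U j \<omega> \<partial>M)"
        unfolding U_def by (intro Bochner_Integration.integral_cong refl) (simp add: sum_nonneg)
      also have "\<dots> = (\<Sum>i<d. \<integral>\<omega>. (Y i \<omega> - S i j \<omega>)\<^sup>2 \<partial>M)"
        unfolding U_def using L2i by (intro Bochner_Integration.integral_sum) auto
      finally show "(\<integral>\<omega>. norm (U j \<omega>) \<partial>M) = (\<Sum>i<d. \<integral>\<omega>. (Y i \<omega> - S i j \<omega>)\<^sup>2 \<partial>M)" .
    qed
    also have "\<dots> \<longlonglongrightarrow> (\<Sum>i<d. 0)"
      using L2i by (intro tendsto_sum) auto
    finally show ?thesis by simp
  qed
  obtain r :: "nat \<Rightarrow> nat" where r: "strict_mono r" and rAE: "AE \<omega> in M. (\<lambda>j. U (r j) \<omega>) \<longlonglongrightarrow> 0"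
    using tendsto_L1_AE_subseq[OF Uint Uconv] by blast
  define G where "G j \<omega> = ennreal (exp (\<mu> * (\<Sum>i<d. (S i (r j) \<omega>)\<^sup>2)))" for j \<omega>
  have Gconv: "AE \<omega> in M. (\<lambda>j. G j \<omega>) \<longlonglongrightarrow> ennreal (exp (\<mu> * (\<Sum>i<d. (Y i \<omega>)\<^sup>2)))"
    using rAE
  proof (eventually_elim)
    case (elim \<omega>)
    have Si: "(\<lambda>j. S i (r j) \<omega>) \<longlonglongrightarrow> Y i \<omega>" if i: "i < d" for i
    proof -
      have "(\<lambda>j. (Y i \<omega> - S i (r j) \<omega>)\<^sup>2) \<longlonglongrightarrow> 0"
      proof (rule tendsto_sandwich[OF _ _ tendsto_const elim])
        show "\<forall>\<^sub>F j in sequentially. 0 \<le> (Y i \<omega> - S i (r j) \<omega>)\<^sup>2" by simp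
        show "\<forall>\<^sub>F j in sequentially. (Y i \<omega> - S i (r j) \<omega>)\<^sup>2 \<le> U (r j) \<omega>"
          unfolding U_def using i by (intro always_eventually allI member_le_sum) auto
      qed
      then have "(\<lambda>j. sqrt ((Y i \<omega> - S i (r j) \<omega>)\<^sup>2)) \<longlonglongrightarrow> sqrt 0"
        by (rule tendsto_real_sqrt)
      then have "(\<lambda>j. \<bar>Y i \<omega> - S i (r j) \<omega>\<bar>) \<longlonglongrightarrow> 0" by simp
      then have "(\<lambda>j. Y i \<omega> - S i (r j) \<omega>) \<longlonglongrightarrow> 0" by (simp add: tendsto_rabs_zero_iff)
      then have "(\<lambda>j. Y i \<omega> - (Y i \<omega> - S i (r j) \<omega>)) \<longlonglongrightarrow> Y i \<omega> - 0"
        by (intro tendsto_diff tendsto_const)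
      then show ?thesis by simp
    qed
    have "(\<lambda>j. exp (\<mu> * (\<Sum>i<d. (S i (r j) \<omega>)\<^sup>2))) \<longlonglongrightarrow> exp (\<mu> * (\<Sum>i<d. (Y i \<omega>)\<^sup>2))"
      using Si by (intro tendsto_exp tendsto_mult tendsto_const tendsto_sum tendsto_power) auto
    then show ?case unfolding G_def by (rule tendsto_ennrealI)
  qed
  have Gint: "(\<integral>\<^sup>+\<omega>. G j \<omega> \<partial>M) = (\<Prod>i<d. ennreal (1 / sqrt (1 - 2 * \<mu> * v i (r j))))"
    if lt: "\<forall>i<d. 2 * \<mu> * v i (r j) < 1" for j
  proof -
    have "(\<integral>\<^sup>+\<omega>. G j \<omega> \<partial>M) = (\<Prod>i<d. \<integral>\<^sup>+\<omega>. ennreal (exp (\<mu> * (S i (r j) \<omega>)\<^sup>2)) \<partial>M)"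
      unfolding G_def S_def Sg_def Sh_def
      by (rule indep_prod_mgf[OF P ind]) (use pg ph in auto)
    also have "\<dots> = (\<Prod>i<d. ennreal (1 / sqrt (1 - 2 * \<mu> * v i (r j))))"
    proof (intro prod.cong refl)
      fix i assume "i \<in> {..<d}"
      then have i: "i < d" by simp
      show "(\<integral>\<^sup>+\<omega>. ennreal (exp (\<mu> * (S i (r j) \<omega>)\<^sup>2)) \<partial>M) = ennreal (1 / sqrt (1 - 2 * \<mu> * v i (r j)))"
        unfolding S_def Sg_def Sh_def
        by (rule step_pair_mgf[OF P _ pg[OF i] ph[OF i] v_def]) (use Wi lt i in auto)
    qed
    finally show ?thesis .
  qed
  have ev: "\<forall>\<^sub>F j in sequentially. \<forall>i\<in>{..<d}. 2 * \<mu> * v i (r j) < 1"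
  proof (rule eventually_ball_finite)
    show "finite {..<d}" by simp
    show "\<forall>i\<in>{..<d}. \<forall>\<^sub>F j in sequentially. 2 * \<mu> * v i (r j) < 1"
    proof
      fix i assume "i \<in> {..<d}"
      then have "(\<lambda>j. v i j) \<longlonglongrightarrow> \<sigma>2" using vconv by auto
      then have "(\<lambda>j. v i (r j)) \<longlonglongrightarrow> \<sigma>2" using LIMSEQ_subseq_LIMSEQ[OF _ r] by (auto simp: o_def)
      then have "(\<lambda>j. 2 * \<mu> * v i (r j)) \<longlonglongrightarrow> 2 * \<mu> * \<sigma>2" by (intro tendsto_mult tendsto_const)
      then show "\<forall>\<^sub>F j in sequentially. 2 * \<mu> * v i (r j) < 1"
        using mu unfolding \<sigma>2_def by (rule order_tendstoD)
    qed
  qed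
  define L where "L = (1 / sqrt (1 - 2 * \<mu> * \<sigma>2)) ^ d"
  have prodconv: "(\<lambda>j. \<Prod>i<d. 1 / sqrt (1 - 2 * \<mu> * v i (r j))) \<longlonglongrightarrow> L"
  proof -
    have "(\<lambda>j. \<Prod>i<d. 1 / sqrt (1 - 2 * \<mu> * v i (r j))) \<longlonglongrightarrow> (\<Prod>i<d. 1 / sqrt (1 - 2 * \<mu> * \<sigma>2))"
    proof (intro tendsto_prod)
      fix i assume "i \<in> {..<d}"
      then have "(\<lambda>j. v i j) \<longlonglongrightarrow> \<sigma>2" using vconv by auto
      then have "(\<lambda>j. v i (r j)) \<longlonglongrightarrow> \<sigma>2" using LIMSEQ_subseq_LIMSEQ[OF _ r] by (auto simp: o_def)
      moreover have "sqrt (1 - 2 * \<mu> * \<sigma>2) \<noteq> 0" using mu unfolding \<sigma>2_def by simp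
      ultimately show "(\<lambda>j. 1 / sqrt (1 - 2 * \<mu> * v i (r j))) \<longlonglongrightarrow> 1 / sqrt (1 - 2 * \<mu> * \<sigma>2)"
        by (intro tendsto_divide tendsto_const tendsto_real_sqrt tendsto_diff tendsto_mult) auto
    qed
    then show ?thesis unfolding L_def by simp
  qed
  have Ieq: "\<forall>\<^sub>F j in sequentially. ennreal (\<Prod>i<d. 1 / sqrt (1 - 2 * \<mu> * v i (r j))) = (\<integral>\<^sup>+\<omega>. G j \<omega> \<partial>M)"
    using ev
  proof (eventually_elim)
    case (elim j)
    then have "(\<integral>\<^sup>+\<omega>. G j \<omega> \<partial>M) = (\<Prod>i<d. ennreal (1 / sqrt (1 - 2 * \<mu> * v i (r j))))"
      using Gint by auto
    also have "\<dots> = ennreal (\<Prod>i<d. 1 / sqrt (1 - 2 * \<mu> * v i (r j)))"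
    proof (intro prod_ennreal)
      fix i assume "i \<in> {..<d}"
      then have "2 * \<mu> * v i (r j) < 1" using elim by blast
      then show "0 \<le> 1 / sqrt (1 - 2 * \<mu> * v i (r j))" by simp
    qed
    finally show ?case by simp
  qed
  have Iconv: "(\<lambda>j. \<integral>\<^sup>+\<omega>. G j \<omega> \<partial>M) \<longlonglongrightarrow> ennreal L"
    using tendsto_ennrealI[OF prodconv] Ieq by (rule Lim_transform_eventually)
  have Gmeas: "G j \<in> borel_measurable M" for j
  proof -
    have "S i (r j) \<in> borel_measurable M" if "i < d" for i
      unfolding S_def[abs_def] Sg_def Sh_def
      using step_ito_meas[OF Wm[OF that] pg[OF that]] step_ito_meas[OF Wm[OF that] ph[OF that]]
      by (intro borel_measurable_diff) auto
    then show ?thesis unfolding G_def[abs_def] by (intro measurable_compose[OF _ measurable_ennreal] borel_measurable_exp borel_measurable_times borel_measurable_const borel_measurable_sum borel_measurable_power) auto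
  qed
  have "(\<integral>\<^sup>+\<omega>. ennreal (exp (\<mu> * (\<Sum>i<d. (Y i \<omega>)\<^sup>2))) \<partial>M) = (\<integral>\<^sup>+\<omega>. liminf (\<lambda>j. G j \<omega>) \<partial>M)"
  proof (rule nn_integral_cong_AE)
    show "AE \<omega> in M. ennreal (exp (\<mu> * (\<Sum>i<d. (Y i \<omega>)\<^sup>2))) = liminf (\<lambda>j. G j \<omega>)"
      using Gconv by eventually_elim (rule lim_imp_Liminf[symmetric], auto)
  qed
  also have "\<dots> \<le> liminf (\<lambda>j. \<integral>\<^sup>+\<omega>. G j \<omega> \<partial>M)"
    by (rule nn_integral_liminf[OF Gmeas])
  also have "\<dots> = ennreal L"
    using Iconv by (intro lim_imp_Liminf) auto
  finally show ?thesis unfolding L_def \<sigma>2_def Y_def .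
qed

definition setupW :: "'a measure \<Rightarrow> (nat \<Rightarrow> real \<Rightarrow> 'a \<Rightarrow> real) \<Rightarrow> (nat \<Rightarrow> (real \<Rightarrow> real) \<Rightarrow> 'a \<Rightarrow> real) \<Rightarrow> nat \<Rightarrow> bool" where
  "setupW M W A d \<longleftrightarrow> prob_space M \<and> (\<forall>i<d. wiener_process01 M (W i)) \<and>
     prob_space.indep_vars M (\<lambda>_. PiM {0..1} (\<lambda>_. borel)) (\<lambda>i \<omega>. \<lambda>t\<in>{0..1}. W i t \<omega>) {..<d} \<and>
     (\<forall>i<d. \<forall>f\<in>L2_01. is_ito_integral M (W i) f (A i f))"

lemma setup_mgf:
  assumes "setupW M W A d" "g \<in> L2_01" "h \<in> L2_01" "2 * \<mu> * (L2norm01 (\<lambda>t. g t - h t))\<^sup>2 < 1"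
  shows "(\<integral>\<^sup>+\<omega>. ennreal (exp (\<mu> * (\<Sum>i<d. (A i g \<omega> - A i h \<omega>)\<^sup>2))) \<partial>M)
           \<le> ennreal ((1 / sqrt (1 - 2 * \<mu> * (L2norm01 (\<lambda>t. g t - h t))\<^sup>2)) ^ d)"
  using assms unfolding setupW_def by (intro ito_mgf) auto

lemma setup_Z_meas:
  assumes "setupW M W A d" "g \<in> L2_01" "h \<in> L2_01"
  shows "(\<lambda>\<omega>. \<Sum>i<d. (A i g \<omega> - A i h \<omega>)\<^sup>2) \<in> borel_measurable M"
proof -
  have "A i g \<in> borel_measurable M \<and> A i h \<in> borel_measurable M" if "i < d" for i
    using assms that ito_approx_ex(1) unfolding setupW_def by blast
  then show ?thesis by (intro borel_measurable_sum borel_measurable_power borel_measurable_diff) auto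
qed

lemma chernoff:
  assumes P: "prob_space M" and Z: "Z \<in> borel_measurable M"
    and mgf: "(\<integral>\<^sup>+\<omega>. ennreal (exp (\<mu> * Z \<omega>)) \<partial>M) \<le> ennreal B"
  shows "measure M {\<omega>\<in>space M. a \<le> \<mu> * Z \<omega>} \<le> B * exp (- a)"
proof -
  interpret prob_space M by (rule P)
  have B0: "0 \<le> B"
  proof -
    have "ennreal 0 \<le> (\<integral>\<^sup>+\<omega>. ennreal (exp (\<mu> * Z \<omega>)) \<partial>M)" by simp
    have "(\<integral>\<^sup>+\<omega>. ennreal (exp (\<mu> * Z \<omega>)) \<partial>M) > 0"
    proof -
      have "(\<integral>\<^sup>+\<omega>. ennreal (exp (\<mu> * Z \<omega>)) \<partial>M) \<noteq> 0"
        using Z by (subst nn_integral_0_iff_AE) (auto simp: AE_False)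
      then show ?thesis by (simp add: zero_less_iff_neq_zero)
    qed
    then have "0 < ennreal B" using mgf by (rule less_le_trans)
    then show ?thesis by (simp add: ennreal_less_zero_iff less_imp_le)
  qed
  have set: "{\<omega>\<in>space M. a \<le> \<mu> * Z \<omega>} = {\<omega>\<in>space M. 1 \<le> ennreal (exp (- a)) * ennreal (exp (\<mu> * Z \<omega>))}"
  proof -
    have "(a \<le> \<mu> * Z \<omega>) \<longleftrightarrow> 1 \<le> ennreal (exp (- a)) * ennreal (exp (\<mu> * Z \<omega>))" for \<omega>
    proof -
      have "1 \<le> ennreal (exp (- a)) * ennreal (exp (\<mu> * Z \<omega>)) \<longleftrightarrow> 1 \<le> exp (- a + \<mu> * Z \<omega>)"
        by (simp add: ennreal_mult'[symmetric] mult_exp_exp del: ennreal_mult')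
      also have "\<dots> \<longleftrightarrow> a \<le> \<mu> * Z \<omega>" by simp
      finally show ?thesis by simp
    qed
    then show ?thesis by auto
  qed
  have "emeasure M {\<omega>\<in>space M. a \<le> \<mu> * Z \<omega>} \<le> ennreal (exp (- a)) * (\<integral>\<^sup>+\<omega>. ennreal (exp (\<mu> * Z \<omega>)) * indicator (space M) \<omega> \<partial>M)"
    unfolding set using Z by (intro nn_integral_Markov_inequality) auto
  also have "(\<integral>\<^sup>+\<omega>. ennreal (exp (\<mu> * Z \<omega>)) * indicator (space M) \<omega> \<partial>M) = (\<integral>\<^sup>+\<omega>. ennreal (exp (\<mu> * Z \<omega>)) \<partial>M)"
    by (intro nn_integral_cong) simp
  also have "ennreal (exp (- a)) * \<dots> \<le> ennreal (exp (- a)) * ennreal B"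
    using mgf by (intro mult_left_mono) auto
  also have "\<dots> = ennreal (B * exp (- a))" using B0 by (simp add: ennreal_mult' mult.commute)
  finally have "emeasure M {\<omega>\<in>space M. a \<le> \<mu> * Z \<omega>} \<le> ennreal (B * exp (- a))" .
  then show ?thesis using B0 by (simp add: emeasure_eq_measure)
qed

lemma sqrt_pow_exp:
  assumes "x > 0"
  shows "sqrt x ^ d = exp (real d / 2 * ln x)"
proof -
  have "sqrt x = x powr (1/2)" using assms by (simp add: powr_half_sqrt)
  also have "\<dots> = exp (ln x / 2)" using assms unfolding powr_def by simp
  finally have "sqrt x = exp (ln x / 2)" .
  then have "sqrt x ^ d = exp (ln x / 2) ^ d" by simp
  also have "\<dots> = exp (real d * (ln x / 2))" by (rule exp_of_nat_mult[symmetric])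
  finally show ?thesis by simp
qed

lemma tail_lower:
  assumes S: "setupW M W A d" and f: "f \<in> L2_01" and g: "g \<in> L2_01"
    and \<sigma>: "L2norm01 (\<lambda>t. f t - g t) > 0" and t2: "0 < \<tau>\<^sub>2" "\<tau>\<^sub>2 < 1"
  shows "measure M {\<omega>\<in>space M. (\<Sum>i<d. (A i f \<omega> - A i g \<omega>)\<^sup>2) < real d * (1 - \<tau>\<^sub>2) * (L2norm01 (\<lambda>t. f t - g t))\<^sup>2}
           \<le> exp (real d / 2 * (\<tau>\<^sub>2 + ln (1 - \<tau>\<^sub>2)))"
proof -
  have P: "prob_space M" using S unfolding setupW_def by auto
  interpret prob_space M by (rule P)
  define s where "s = L2norm01 (\<lambda>t. f t - g t)"
  define Z where "Z \<omega> = (\<Sum>i<d. (A i f \<omega> - A i g \<omega>)\<^sup>2)" for \<omega>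
  define \<mu> where "\<mu> = - (\<tau>\<^sub>2 / (1 - \<tau>\<^sub>2)) / (2 * s\<^sup>2)"
  define c where "c = real d * (1 - \<tau>\<^sub>2) * s\<^sup>2"
  have sp: "s > 0" using \<sigma> s_def by simp
  have mu_neg: "\<mu> < 0" unfolding \<mu>_def using sp t2 by (simp add: divide_neg_pos)
  have m2: "2 * \<mu> * s\<^sup>2 = - (\<tau>\<^sub>2 / (1 - \<tau>\<^sub>2))" unfolding \<mu>_def using sp by simp
  have m1: "1 - 2 * \<mu> * s\<^sup>2 = 1 / (1 - \<tau>\<^sub>2)" unfolding m2 using t2 by (simp add: field_simps)
  have lt1: "2 * \<mu> * s\<^sup>2 < 1" unfolding m2 using t2 by (simp add: field_simps)
  have Zm: "Z \<in> borel_measurable M" unfolding Z_def[abs_def] using setup_Z_meas[OF S f g] .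
  have mgf: "(\<integral>\<^sup>+\<omega>. ennreal (exp (\<mu> * Z \<omega>)) \<partial>M) \<le> ennreal (sqrt (1 - \<tau>\<^sub>2) ^ d)"
  proof -
    have "(\<integral>\<^sup>+\<omega>. ennreal (exp (\<mu> * Z \<omega>)) \<partial>M) \<le> ennreal ((1 / sqrt (1 - 2 * \<mu> * s\<^sup>2)) ^ d)"
      unfolding Z_def s_def using setup_mgf[OF S f g lt1[unfolded s_def]] .
    also have "(1 / sqrt (1 - 2 * \<mu> * s\<^sup>2)) = sqrt (1 - \<tau>\<^sub>2)" unfolding m1 using t2 by (simp add: real_sqrt_divide)
    finally show ?thesis .
  qed
  have "measure M {\<omega>\<in>space M. \<mu> * c \<le> \<mu> * Z \<omega>} \<le> sqrt (1 - \<tau>\<^sub>2) ^ d * exp (- (\<mu> * c))"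
    by (rule chernoff[OF P Zm mgf])
  moreover have "- (\<mu> * c) = real d / 2 * \<tau>\<^sub>2" unfolding \<mu>_def c_def using sp t2 by (simp add: field_simps)
  moreover have "sqrt (1 - \<tau>\<^sub>2) ^ d = exp (real d / 2 * ln (1 - \<tau>\<^sub>2))" using t2 by (intro sqrt_pow_exp) simp
  ultimately have b: "measure M {\<omega>\<in>space M. \<mu> * c \<le> \<mu> * Z \<omega>} \<le> exp (real d / 2 * (\<tau>\<^sub>2 + ln (1 - \<tau>\<^sub>2)))"
    by (simp add: mult_exp_exp distrib_left add.commute)
  have "measure M {\<omega>\<in>space M. Z \<omega> < c} \<le> measure M {\<omega>\<in>space M. \<mu> * c \<le> \<mu> * Z \<omega>}"
  proof (rule finite_measure_mono)
    show "{\<omega>\<in>space M. Z \<omega> < c} \<subseteq> {\<omega>\<in>space M. \<mu> * c \<le> \<mu> * Z \<omega>}"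
      using mu_neg by (auto intro: mult_left_mono_neg less_imp_le)
    show "{\<omega>\<in>space M. \<mu> * c \<le> \<mu> * Z \<omega>} \<in> sets M" using Zm by measurable
  qed
  then show ?thesis using b unfolding Z_def c_def s_def by linarith
qed

lemma tail_upper_pos:
  assumes S: "setupW M W A d" and f: "f \<in> L2_01" and g: "g \<in> L2_01"
    and sp: "s > 0" and ss: "L2norm01 (\<lambda>t. f t - g t) \<le> s" and t1: "0 < \<tau>\<^sub>1"
  shows "measure M {\<omega>\<in>space M. real d * (1 + \<tau>\<^sub>1) * s\<^sup>2 < (\<Sum>i<d. (A i f \<omega> - A i g \<omega>)\<^sup>2)}
           \<le> exp (- (real d / 2) * (\<tau>\<^sub>1 - ln (1 + \<tau>\<^sub>1)))"
proof -
  have P: "prob_space M" using S unfolding setupW_def by auto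
  interpret prob_space M by (rule P)
  define \<sigma> where "\<sigma> = L2norm01 (\<lambda>t. f t - g t)"
  define Z where "Z \<omega> = (\<Sum>i<d. (A i f \<omega> - A i g \<omega>)\<^sup>2)" for \<omega>
  define \<mu> where "\<mu> = (\<tau>\<^sub>1 / (1 + \<tau>\<^sub>1)) / (2 * s\<^sup>2)"
  define c where "c = real d * (1 + \<tau>\<^sub>1) * s\<^sup>2"
  have \<sigma>0: "0 \<le> \<sigma>" unfolding \<sigma>_def by (rule L2norm01_nonneg)
  have \<sigma>s: "\<sigma>\<^sup>2 \<le> s\<^sup>2" using ss \<sigma>0 unfolding \<sigma>_def by (intro power_mono) auto
  have mu_pos: "\<mu> > 0" unfolding \<mu>_def using sp t1 by simp
  have m2: "2 * \<mu> * s\<^sup>2 = \<tau>\<^sub>1 / (1 + \<tau>\<^sub>1)" unfolding \<mu>_def using sp by simp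
  have m1: "1 - 2 * \<mu> * s\<^sup>2 = 1 / (1 + \<tau>\<^sub>1)" unfolding m2 using t1 by (simp add: field_simps)
  have lts: "2 * \<mu> * s\<^sup>2 < 1" unfolding m2 using t1 by simp
  have le: "2 * \<mu> * \<sigma>\<^sup>2 \<le> 2 * \<mu> * s\<^sup>2" using \<sigma>s mu_pos by simp
  have lt1: "2 * \<mu> * \<sigma>\<^sup>2 < 1" using le lts by linarith
  have Zm: "Z \<in> borel_measurable M" unfolding Z_def[abs_def] using setup_Z_meas[OF S f g] .
  have mgf: "(\<integral>\<^sup>+\<omega>. ennreal (exp (\<mu> * Z \<omega>)) \<partial>M) \<le> ennreal (sqrt (1 + \<tau>\<^sub>1) ^ d)"
  proof -
    have "(\<integral>\<^sup>+\<omega>. ennreal (exp (\<mu> * Z \<omega>)) \<partial>M) \<le> ennreal ((1 / sqrt (1 - 2 * \<mu> * \<sigma>\<^sup>2)) ^ d)"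
      unfolding Z_def \<sigma>_def using setup_mgf[OF S f g lt1[unfolded \<sigma>_def]] .
    also have "(1 / sqrt (1 - 2 * \<mu> * \<sigma>\<^sup>2)) ^ d \<le> (1 / sqrt (1 - 2 * \<mu> * s\<^sup>2)) ^ d"
    proof (rule power_mono)
      have "sqrt (1 - 2 * \<mu> * s\<^sup>2) \<le> sqrt (1 - 2 * \<mu> * \<sigma>\<^sup>2)" using le by simp
      moreover have "0 < sqrt (1 - 2 * \<mu> * s\<^sup>2)" using lts by simp
      moreover have "0 < sqrt (1 - 2 * \<mu> * \<sigma>\<^sup>2)" using lt1 by simp
      ultimately show "1 / sqrt (1 - 2 * \<mu> * \<sigma>\<^sup>2) \<le> 1 / sqrt (1 - 2 * \<mu> * s\<^sup>2)"
        by (intro divide_left_mono mult_pos_pos) auto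
      show "0 \<le> 1 / sqrt (1 - 2 * \<mu> * \<sigma>\<^sup>2)" using lt1 by simp
    qed
    then have "ennreal ((1 / sqrt (1 - 2 * \<mu> * \<sigma>\<^sup>2)) ^ d) \<le> ennreal ((1 / sqrt (1 - 2 * \<mu> * s\<^sup>2)) ^ d)"
      by (rule ennreal_leI)
    also have "(1 / sqrt (1 - 2 * \<mu> * s\<^sup>2)) = sqrt (1 + \<tau>\<^sub>1)" unfolding m1 using t1 by (simp add: real_sqrt_divide)
    finally show ?thesis .
  qed
  have "measure M {\<omega>\<in>space M. \<mu> * c \<le> \<mu> * Z \<omega>} \<le> sqrt (1 + \<tau>\<^sub>1) ^ d * exp (- (\<mu> * c))"
    by (rule chernoff[OF P Zm mgf])
  then have ch: "measure M {\<omega>\<in>space M. \<mu> * c \<le> \<mu> * Z \<omega>} \<le> sqrt (1 + \<tau>\<^sub>1) ^ d * exp (- (\<mu> * c))" .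
  have mc: "\<mu> * c = real d / 2 * \<tau>\<^sub>1"
  proof -
    have c2: "c = (2 * s\<^sup>2) * (real d * (1 + \<tau>\<^sub>1) / 2)" unfolding c_def by simp
    have h1: "\<mu> * (2 * s\<^sup>2) = \<tau>\<^sub>1 / (1 + \<tau>\<^sub>1)" using m2 by (simp add: mult_ac)
    have "\<mu> * c = (\<mu> * (2 * s\<^sup>2)) * (real d * (1 + \<tau>\<^sub>1) / 2)" unfolding c2 by (rule mult.assoc[symmetric])
    also have "\<dots> = \<tau>\<^sub>1 / (1 + \<tau>\<^sub>1) * (real d * (1 + \<tau>\<^sub>1) / 2)" unfolding h1 ..
    also have "\<dots> = real d / 2 * \<tau>\<^sub>1" using t1 by (simp add: field_simps)
    finally show ?thesis .
  qed
  have sq: "sqrt (1 + \<tau>\<^sub>1) ^ d = exp (real d / 2 * ln (1 + \<tau>\<^sub>1))" using t1 by (intro sqrt_pow_exp) simp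
  have ex: "real d / 2 * ln (1 + \<tau>\<^sub>1) + - (real d / 2 * \<tau>\<^sub>1) = - (real d / 2) * (\<tau>\<^sub>1 - ln (1 + \<tau>\<^sub>1))"
    by (simp add: field_simps)
  have b: "measure M {\<omega>\<in>space M. \<mu> * c \<le> \<mu> * Z \<omega>} \<le> exp (- (real d / 2) * (\<tau>\<^sub>1 - ln (1 + \<tau>\<^sub>1)))"
    using ch unfolding mc sq mult_exp_exp ex .
  have "measure M {\<omega>\<in>space M. c < Z \<omega>} \<le> measure M {\<omega>\<in>space M. \<mu> * c \<le> \<mu> * Z \<omega>}"
  proof (rule finite_measure_mono)
    show "{\<omega>\<in>space M. c < Z \<omega>} \<subseteq> {\<omega>\<in>space M. \<mu> * c \<le> \<mu> * Z \<omega>}"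
      using mu_pos by (auto intro: mult_left_mono less_imp_le)
    show "{\<omega>\<in>space M. \<mu> * c \<le> \<mu> * Z \<omega>} \<in> sets M" using Zm by measurable
  qed
  then show ?thesis using b unfolding Z_def c_def by linarith
qed

lemma le_exp_neg_all_zero:
  fixes p e :: real
  assumes p0: "0 \<le> p" and e: "e > 0" and le: "\<And>\<mu>. \<mu> > 0 \<Longrightarrow> p \<le> exp (- (\<mu> * e))"
  shows "p = 0"
proof (rule ccontr)
  assume "p \<noteq> 0"
  then have pp: "p > 0" using p0 by simp
  define x where "x = 2 / p"
  have xp: "x > 0" unfolding x_def using pp by simp
  have "p \<le> exp (- ((x / e) * e))" by (rule le) (use xp e in simp)
  also have "(x / e) * e = x" using e by simp
  finally have 1: "p \<le> exp (- x)" .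
  have "exp (- x) * (1 + x) \<le> exp (- x) * exp x" by (intro mult_left_mono exp_ge_add_one_self) simp
  also have "\<dots> = 1" by (simp add: mult_exp_exp)
  finally have "exp (- x) * (1 + x) \<le> 1" .
  moreover have "p * (1 + x) \<le> exp (- x) * (1 + x)" using 1 xp by (intro mult_right_mono) auto
  ultimately have "p * (1 + x) \<le> 1" by linarith
  moreover have "p * (1 + x) = p + 2" unfolding x_def using pp by (simp add: field_simps)
  ultimately show False using pp by simp
qed

lemma tail_zero:
  assumes S: "setupW M W A d" and f: "f \<in> L2_01" and g: "g \<in> L2_01"
    and s0: "L2norm01 (\<lambda>t. f t - g t) = 0"
  shows "measure M {\<omega>\<in>space M. 0 < (\<Sum>i<d. (A i f \<omega> - A i g \<omega>)\<^sup>2)} = 0"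
proof -
  have P: "prob_space M" using S unfolding setupW_def by auto
  interpret prob_space M by (rule P)
  define Z where "Z \<omega> = (\<Sum>i<d. (A i f \<omega> - A i g \<omega>)\<^sup>2)" for \<omega>
  have Zm: "Z \<in> borel_measurable M" unfolding Z_def[abs_def] using setup_Z_meas[OF S f g] .
  define E where "E n = {\<omega>\<in>space M. 1 / real (Suc n) \<le> Z \<omega>}" for n
  have Es: "E n \<in> sets M" for n unfolding E_def using Zm by measurable
  have E0: "measure M (E n) = 0" for n
  proof (rule le_exp_neg_all_zero)
    show "0 \<le> measure M (E n)" by simp
    show "1 / real (Suc n) > 0" by simp
    fix \<mu> :: real assume mu: "\<mu> > 0"
    have mgf: "(\<integral>\<^sup>+\<omega>. ennreal (exp (\<mu> * Z \<omega>)) \<partial>M) \<le> ennreal 1"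
      using setup_mgf[OF S f g, of \<mu>] unfolding s0 Z_def by simp
    have "measure M {\<omega>\<in>space M. \<mu> * (1 / real (Suc n)) \<le> \<mu> * Z \<omega>} \<le> 1 * exp (- (\<mu> * (1 / real (Suc n))))"
      by (rule chernoff[OF P Zm mgf])
    moreover have "E n = {\<omega>\<in>space M. \<mu> * (1 / real (Suc n)) \<le> \<mu> * Z \<omega>}"
      unfolding E_def using mult_le_cancel_left_pos[OF mu, of "1 / real (Suc n)"] by blast
    ultimately show "measure M (E n) \<le> exp (- (\<mu> * (1 / real (Suc n))))" by simp
  qed
  have "(\<Union>n. E n) \<in> null_sets M"
    using E0 Es by (intro null_sets_UN null_setsI) (auto simp: emeasure_eq_measure)
  moreover have "{\<omega>\<in>space M. 0 < Z \<omega>} = (\<Union>n. E n)"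
  proof
    show "{\<omega>\<in>space M. 0 < Z \<omega>} \<subseteq> (\<Union>n. E n)"
    proof
      fix \<omega> assume "\<omega> \<in> {\<omega>\<in>space M. 0 < Z \<omega>}"
      then have w: "\<omega> \<in> space M" "0 < Z \<omega>" by auto
      obtain n where "1 / real (Suc n) < Z \<omega>" using reals_Archimedean[OF w(2)] by (auto simp: inverse_eq_divide)
      then show "\<omega> \<in> (\<Union>n. E n)" using w unfolding E_def by (auto intro: less_imp_le)
    qed
    show "(\<Union>n. E n) \<subseteq> {\<omega>\<in>space M. 0 < Z \<omega>}"
    proof
      fix \<omega> assume "\<omega> \<in> (\<Union>n. E n)"
      then obtain n where "\<omega> \<in> space M" "1 / real (Suc n) \<le> Z \<omega>" unfolding E_def by auto
      moreover have "0 < 1 / real (Suc n)" by simp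
      ultimately have "\<omega> \<in> space M" "0 < Z \<omega>" by linarith+
      then show "\<omega> \<in> {\<omega>\<in>space M. 0 < Z \<omega>}" by simp
    qed
  qed
  ultimately have "{\<omega>\<in>space M. 0 < Z \<omega>} \<in> null_sets M" by simp
  then have "emeasure M {\<omega>\<in>space M. 0 < Z \<omega>} = 0" by blast
  then show ?thesis unfolding Z_def measure_def by simp
qed

lemma tail_upper:
  assumes S: "setupW M W A d" and f: "f \<in> L2_01" and g: "g \<in> L2_01"
    and s0: "s \<ge> 0" and ss: "L2norm01 (\<lambda>t. f t - g t) \<le> s" and t1: "0 < \<tau>\<^sub>1"
  shows "measure M {\<omega>\<in>space M. real d * (1 + \<tau>\<^sub>1) * s\<^sup>2 < (\<Sum>i<d. (A i f \<omega> - A i g \<omega>)\<^sup>2)}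
           \<le> exp (- (real d / 2) * (\<tau>\<^sub>1 - ln (1 + \<tau>\<^sub>1)))"
proof (cases "s > 0")
  case True
  then show ?thesis using tail_upper_pos[OF S f g True ss t1] by simp
next
  case False
  then have "s = 0" using s0 by simp
  moreover have "L2norm01 (\<lambda>t. f t - g t) = 0" using ss L2norm01_nonneg[of "\<lambda>t. f t - g t"] \<open>s = 0\<close> by simp
  ultimately show ?thesis using tail_zero[OF S f g] by simp
qed

theorem theorem10:
  fixes M :: "'a measure"
    and W :: "nat \<Rightarrow> real \<Rightarrow> 'a \<Rightarrow> real"
    and A :: "nat \<Rightarrow> (real \<Rightarrow> real) \<Rightarrow> 'a \<Rightarrow> real"
    and F :: "(real \<Rightarrow> real) set"
    and Enc :: "(real \<Rightarrow> real) \<Rightarrow> nat" and Dec :: "nat \<Rightarrow> (real \<Rightarrow> real)"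
    and r d :: nat and \<delta> \<tau>\<^sub>1 \<tau>\<^sub>2 :: real and f\<^sub>o :: "real \<Rightarrow> real"
  assumes "prob_space M"
    and "\<forall>i<d. wiener_process01 M (W i)"
    and "prob_space.indep_vars M (\<lambda>_. PiM {0..1} (\<lambda>_. borel))
           (\<lambda>i \<omega>. \<lambda>t\<in>{0..1}. W i t \<omega>) {..<d}"
    and "\<forall>i<d. \<forall>f\<in>L2_01. is_ito_integral M (W i) f (A i f)"
    and "F \<subseteq> L2_01"
    and "compression_code F r Enc Dec"
    and "distortion F Enc Dec = ereal \<delta>"
    and "f\<^sub>o \<in> F"
    and "\<tau>\<^sub>1 > 0" and "0 < \<tau>\<^sub>2" and "\<tau>\<^sub>2 < 1"
  shows "\<exists>Ev\<in>sets M.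
           measure M Ev \<ge> 1 - 2^r * exp (real d / 2 * (\<tau>\<^sub>2 + ln (1 - \<tau>\<^sub>2)))
                             - exp (- (real d / 2) * (\<tau>\<^sub>1 - ln (1 + \<tau>\<^sub>1))) \<and>
           (\<forall>\<omega>\<in>Ev. \<forall>fhat\<in>codebook F Enc Dec.
              (\<forall>g\<in>codebook F Enc Dec.
                 (\<Sum>i<d. (A i f\<^sub>o \<omega> - A i fhat \<omega>)\<^sup>2) \<le> (\<Sum>i<d. (A i f\<^sub>o \<omega> - A i g \<omega>)\<^sup>2))
              \<longrightarrow> L2norm01 (\<lambda>t. fhat t - f\<^sub>o t) \<le> \<delta> * sqrt ((1 + \<tau>\<^sub>1) / (1 - \<tau>\<^sub>2)))"
proof -
  note P = assms(1) and FL = assms(5) and cc = assms(6) and dist = assms(7) and fo = assms(8)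
    and t1 = assms(9) and t2 = assms(10,11)
  interpret prob_space M by (rule P)
  have S: "setupW M W A d" unfolding setupW_def using assms(1-4) by auto
  define C where "C = codebook F Enc Dec"
  define E1 where "E1 = exp (- (real d / 2) * (\<tau>\<^sub>1 - ln (1 + \<tau>\<^sub>1)))"
  define E2 where "E2 = exp (real d / 2 * (\<tau>\<^sub>2 + ln (1 - \<tau>\<^sub>2)))"
  define \<beta> where "\<beta> = sqrt ((1 + \<tau>\<^sub>1) / (1 - \<tau>\<^sub>2))"
  define ft where "ft = Dec (Enc f\<^sub>o)"
  define Z where "Z g \<omega> = (\<Sum>i<d. (A i f\<^sub>o \<omega> - A i g \<omega>)\<^sup>2)" for g \<omega>
  have CD: "C \<subseteq> Dec ` {1..2^r}" unfolding C_def codebook_def using cc unfolding compression_code_def by auto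
  have CL: "C \<subseteq> L2_01" using CD cc unfolding compression_code_def by auto
  have finC: "finite C" using CD finite_subset by blast
  have cardC: "card C \<le> 2^r"
    using card_mono[OF _ CD] card_image_le[of "{1..2^r}" Dec] by fastforce
  have ftC: "ft \<in> C" unfolding C_def codebook_def ft_def using fo by auto
  have foL: "f\<^sub>o \<in> L2_01" using fo FL by auto
  have ftL: "ft \<in> L2_01" using ftC CL by auto
  have fd: "L2norm01 (\<lambda>t. f\<^sub>o t - ft t) \<le> \<delta>"
  proof -
    have "ereal (L2norm01 (\<lambda>t. f\<^sub>o t - Dec (Enc f\<^sub>o) t)) \<le> distortion F Enc Dec"
      unfolding distortion_def using fo by (rule SUP_upper2) simp
    then show ?thesis using dist unfolding ft_def by simp
  qed
  have d0: "0 \<le> \<delta>" using fd L2norm01_nonneg[of "\<lambda>t. f\<^sub>o t - ft t"] by linarith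
  show ?thesis
  proof (cases "d = 0")
    case True
    have "1 - 2^r * E2 - E1 \<le> 0" unfolding E1_def E2_def True
      using one_le_power[of "2::real" r] by simp
    then show ?thesis unfolding E1_def E2_def by (intro bexI[of _ "{}"]) auto
  next
    case False
    then have dpos: "real d > 0" by simp
    define B where "B = {g\<in>C. \<delta> * \<beta> < L2norm01 (\<lambda>t. g t - f\<^sub>o t)}"
    define Bad0 where "Bad0 = {\<omega>\<in>space M. real d * (1 + \<tau>\<^sub>1) * \<delta>\<^sup>2 < Z ft \<omega>}"
    define Bad where "Bad g = {\<omega>\<in>space M. Z g \<omega> < real d * (1 - \<tau>\<^sub>2) * (L2norm01 (\<lambda>t. f\<^sub>o t - g t))\<^sup>2}" for g
    define U where "U = Bad0 \<union> (\<Union>g\<in>B. Bad g)"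
    define Ev where "Ev = space M - U"
    have finB: "finite B" using finC unfolding B_def by auto
    have cardB: "real (card B) \<le> 2^r"
    proof -
      have "card B \<le> card C" using card_mono[OF finC] unfolding B_def by auto
      then have "card B \<le> 2^r" using cardC by simp
      then show ?thesis by (metis of_nat_le_iff of_nat_numeral of_nat_power)
    qed
    have Zm: "(\<lambda>\<omega>. Z g \<omega>) \<in> borel_measurable M" if "g \<in> L2_01" for g
      unfolding Z_def using setup_Z_meas[OF S foL that] .
    have Bad0s: "Bad0 \<in> sets M" unfolding Bad0_def using Zm[OF ftL] by measurable
    have Bads: "Bad g \<in> sets M" if "g \<in> C" for g
    proof -
      have gL: "g \<in> L2_01" using CL that by auto
      show ?thesis unfolding Bad_def using Zm[OF gL] by measurable
    qed
    have Us: "U \<in> sets M" unfolding U_def using Bad0s Bads finB B_def by auto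
    have mBad0: "measure M Bad0 \<le> E1"
      unfolding Bad0_def E1_def Z_def
      by (rule tail_upper[OF S foL ftL d0 fd t1])
    have mBad: "measure M (Bad g) \<le> E2" if g: "g \<in> B" for g
    proof -
      have gC: "g \<in> C" and gt: "\<delta> * \<beta> < L2norm01 (\<lambda>t. g t - f\<^sub>o t)" using g B_def by auto
      have "0 \<le> \<delta> * \<beta>" unfolding \<beta>_def using d0 t1 t2 by simp
      then have pos: "L2norm01 (\<lambda>t. f\<^sub>o t - g t) > 0" using gt L2norm01_minus[of g f\<^sub>o] by simp
      show ?thesis unfolding Bad_def E2_def Z_def
        by (rule tail_lower[OF S foL _ pos t2]) (use gC CL in auto)
    qed
    have "measure M U \<le> measure M Bad0 + measure M (\<Union>g\<in>B. Bad g)"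
      unfolding U_def using Bad0s Bads B_def finB by (intro measure_Un_le) auto
    also have "measure M (\<Union>g\<in>B. Bad g) \<le> (\<Sum>g\<in>B. measure M (Bad g))"
      using Bads B_def finB by (intro finite_measure_subadditive_finite) auto
    also have "(\<Sum>g\<in>B. measure M (Bad g)) \<le> (\<Sum>g\<in>B. E2)" using mBad by (intro sum_mono) auto
    also have "(\<Sum>g\<in>B. E2) = real (card B) * E2" by simp
    also have "\<dots> \<le> 2^r * E2" using cardB unfolding E2_def by (intro mult_right_mono) auto
    finally have mU: "measure M U \<le> E1 + 2^r * E2" using mBad0 by linarith
    have mEv: "measure M Ev = 1 - measure M U" unfolding Ev_def using Us by (rule prob_compl)
    have good: "L2norm01 (\<lambda>t. fhat t - f\<^sub>o t) \<le> \<delta> * \<beta>"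
      if w: "\<omega> \<in> Ev" and fh: "fhat \<in> C" and mn: "\<forall>g\<in>C. Z fhat \<omega> \<le> Z g \<omega>" for \<omega> fhat
    proof (rule ccontr)
      assume "\<not> ?thesis"
      then have gt: "\<delta> * \<beta> < L2norm01 (\<lambda>t. fhat t - f\<^sub>o t)" by simp
      then have "fhat \<in> B" unfolding B_def using fh by auto
      then have "\<omega> \<notin> Bad fhat" using w unfolding Ev_def U_def by auto
      then have 1: "real d * (1 - \<tau>\<^sub>2) * (L2norm01 (\<lambda>t. f\<^sub>o t - fhat t))\<^sup>2 \<le> Z fhat \<omega>"
        using w unfolding Bad_def Ev_def by auto
      have "\<omega> \<notin> Bad0" using w unfolding Ev_def U_def by auto
      then have 2: "Z ft \<omega> \<le> real d * (1 + \<tau>\<^sub>1) * \<delta>\<^sup>2" using w unfolding Bad0_def Ev_def by auto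
      have 3: "Z fhat \<omega> \<le> Z ft \<omega>" using mn ftC by auto
      define N where "N = L2norm01 (\<lambda>t. fhat t - f\<^sub>o t)"
      have NN: "L2norm01 (\<lambda>t. f\<^sub>o t - fhat t) = N" unfolding N_def by (rule L2norm01_minus)
      have db0: "0 \<le> \<delta> * \<beta>" unfolding \<beta>_def using d0 t1 t2 by simp
      have "(\<delta> * \<beta>)\<^sup>2 < N\<^sup>2" using gt db0 unfolding N_def by (intro power_strict_mono) auto
      moreover have "(\<delta> * \<beta>)\<^sup>2 = \<delta>\<^sup>2 * ((1 + \<tau>\<^sub>1) / (1 - \<tau>\<^sub>2))"
        unfolding \<beta>_def using t1 t2 by (simp add: power_mult_distrib)
      ultimately have "\<delta>\<^sup>2 * ((1 + \<tau>\<^sub>1) / (1 - \<tau>\<^sub>2)) < N\<^sup>2" by simp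
      then have "(1 - \<tau>\<^sub>2) * (\<delta>\<^sup>2 * ((1 + \<tau>\<^sub>1) / (1 - \<tau>\<^sub>2))) < (1 - \<tau>\<^sub>2) * N\<^sup>2"
        using t2 by (intro mult_strict_left_mono) auto
      moreover have "(1 - \<tau>\<^sub>2) * (\<delta>\<^sup>2 * ((1 + \<tau>\<^sub>1) / (1 - \<tau>\<^sub>2))) = (1 + \<tau>\<^sub>1) * \<delta>\<^sup>2"
        using t2 by (simp add: field_simps)
      ultimately have "(1 + \<tau>\<^sub>1) * \<delta>\<^sup>2 < (1 - \<tau>\<^sub>2) * N\<^sup>2" by simp
      then have "real d * ((1 + \<tau>\<^sub>1) * \<delta>\<^sup>2) < real d * ((1 - \<tau>\<^sub>2) * N\<^sup>2)"
        using dpos by (intro mult_strict_left_mono) auto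
      then show False using 1 2 3 unfolding NN by (simp add: mult.assoc)
    qed
    show ?thesis
    proof (rule bexI[of _ Ev], intro conjI ballI impI)
      show "Ev \<in> sets M" unfolding Ev_def using Us by auto
      show "1 - 2^r * exp (real d / 2 * (\<tau>\<^sub>2 + ln (1 - \<tau>\<^sub>2))) - exp (- (real d / 2) * (\<tau>\<^sub>1 - ln (1 + \<tau>\<^sub>1))) \<le> measure M Ev"
        using mEv mU unfolding E1_def E2_def by linarith
      fix \<omega> fhat assume w: "\<omega> \<in> Ev" and fh: "fhat \<in> codebook F Enc Dec"
        and mn: "\<forall>g\<in>codebook F Enc Dec. (\<Sum>i<d. (A i f\<^sub>o \<omega> - A i fhat \<omega>)\<^sup>2) \<le> (\<Sum>i<d. (A i f\<^sub>o \<omega> - A i g \<omega>)\<^sup>2)"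
      show "L2norm01 (\<lambda>t. fhat t - f\<^sub>o t) \<le> \<delta> * sqrt ((1 + \<tau>\<^sub>1) / (1 - \<tau>\<^sub>2))"
        using good[OF w fh[folded C_def]] mn unfolding C_def Z_def \<beta>_def by blast
    qed
  qed
qed

end
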